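(* Let $p=2$ and $n\geq 1$. The $E_2$-term $E_2^{*,*,*}S(n,n)$ of the May spectral sequence for $S(n,n)$ is isomorphic to the tensor product of $E[h_{s,j}\mid n<s<2n,\ j\in\mathbb{Z}/n]$ and $E[h_{n,j},\rho_{2n}\mid j\in\mathbb{Z}/n]\otimes P[h_{n,n-1}]$, where $\rho_{2n}=\sum_{0\leq j<n}h_{2n,j}$ and $h_{n,j}^2=h_{n,n-1}^2$.
   Context: At $p=2$, $S(n,n)=\mathbb{Z}/2[t_n,t_{n+1},\dots]/(t_s^{2^n}-t_s)$ is the Hopf algebra with coproduct $\Delta(t_s)=1\otimes t_s+\sum_{n\leq i\leq s-n}t_i\otimes t_{s-i}^{2^i}+t_s\otimes1$ for $s\leq 2n-1$ and the same minus $t_{s-n}^{2^{n-1}}\otimes t_{s-n}^{2^{n-1}}$ for $s\geq 2n$. May filtration: $M(t_s^{2^j})=2s-1$ for $n\le s\le 2n-1$, $M(t_s^{2^j})=\max\{2s-1,2M(t_{s-n}^{2^{j+n-1}})+1\}$ for $s\ge 2n$, extended to monomials by $M(t_s^{\sum j_i2^i})=\sum j_iM(t_s^{2^i})$ and additively over distinct $t_s$, and to cobar elements by $M([\alpha_1|\cdots|\alpha_s])=\sum M(\alpha_i)$; the resulting May spectral sequence $E_r^{s,t,M}S(n,n)$ converges to $\mathrm{Ext}_{S(n,n)}(\mathbb{Z}/2,\mathbb{Z}/2)$, and $h_{i,j}$ ($i\ge n$, $j\in\mathbb{Z}/n$) denotes the class in $E_1$ of $[t_i^{2^j}]$. Its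 $E_2$-term is the cohomology of $P[h_{n,j}\mid j\in\mathbb{Z}/n]\otimes E[h_{s,j}\mid n<s\leq 2n,\ j\in\mathbb{Z}/n]$ with the only nontrivial differentials on generators $d_1(h_{2n,j})=h_{n,j-1}^2+h_{n,j}^2$. *)

theory Defs
  imports "HOL-Library.Poly_Mapping" "HOL-Library.Z2"
begin

text \<open>Polynomial ring over F_2 in variables indexed by pairs (s,j) of naturals.\<close>

type_synonym mon = "(nat \<times> nat) \<Rightarrow>\<^sub>0 nat"
type_synonym pol = "mon \<Rightarrow>\<^sub>0 bit"

definition var :: "nat \<times> nat \<Rightarrow> pol" where
  "var v = Poly_Mapping.single (Poly_Mapping.single v 1) 1"

definition ideal_gen :: "'a::comm_ring_1 set \<Rightarrow> 'a set" where
  "ideal_gen G = {x. \<exists>S f. finite S \<and> S \<subseteq> G \<and> x = (\<Sum>g\<in>S. f g * g)}"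

text \<open>Indices j in Z/n are represented by 0..<n; predecessor j-1 mod n.\<close>
definition prev :: "nat \<Rightarrow> nat \<Rightarrow> nat" where
  "prev n j = (j + n - 1) mod n"

text \<open>The complex computing E_2: P[h_{n,j}] (x) E[h_{s,j} | n<s<=2n], j in Z/n,
  realised as the polynomial ring pol modulo the ideal I_D generated by all variables
  outside this generating set and by the squares of the exterior generators
  (exterior algebra over F_2 = polynomial algebra modulo squares).\<close>

definition gensD :: "nat \<Rightarrow> (nat \<times> nat) set" where
  "gensD n = {(s, j). n \<le> s \<and> s \<le> 2 * n \<and> j < n}"

definition ID :: "nat \<Rightarrow> pol set" where
  "ID n = ideal_gen ({var v | v. v \<notin> gensD n} \<union>
                     {var (s, j) ^ 2 | s j. n < s \<and> s \<le> 2 * n \<and> j < n})"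

definition dgen :: "nat \<Rightarrow> nat \<times> nat \<Rightarrow> pol" where
  "dgen n v = (if fst v = 2 * n \<and> snd v < n
               then var (n, prev n (snd v)) ^ 2 + var (n, snd v) ^ 2 else 0)"

text \<open>The derivation extending dgen (signs are irrelevant in characteristic 2).\<close>
definition dmon :: "nat \<Rightarrow> mon \<Rightarrow> pol" where
  "dmon n m = (\<Sum>v\<in>Poly_Mapping.keys m.
      of_nat (Poly_Mapping.lookup m v) * Poly_Mapping.single (m - Poly_Mapping.single v 1) 1 * dgen n v)"

definition dd :: "nat \<Rightarrow> pol \<Rightarrow> pol" where
  "dd n p = (\<Sum>m\<in>Poly_Mapping.keys p.
      Poly_Mapping.single 0 (Poly_Mapping.lookup p m) * dmon n m)"

text \<open>Cycles and boundaries (as subsets of pol, modulo ID): the E_2 term is ZD / BD.\<close>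
definition ZD :: "nat \<Rightarrow> pol set" where
  "ZD n = {x. dd n x \<in> ID n}"

definition BD :: "nat \<Rightarrow> pol set" where
  "BD n = {dd n y + i | y i. i \<in> ID n}"

text \<open>The claimed algebra E[h_{s,j} | n<s<2n] (x) E[h_{n,j}, rho] (x) P[h_{n,n-1}] with
  h_{n,j}^2 = h_{n,n-1}^2, realised as pol modulo the ideal JA.\<close>

definition rho_var :: "nat \<Rightarrow> nat \<times> nat" where
  "rho_var n = (2 * n, 0)"

definition gensA :: "nat \<Rightarrow> (nat \<times> nat) set" where
  "gensA n = {(s, j). n \<le> s \<and> s < 2 * n \<and> j < n} \<union> {rho_var n}"

definition JA :: "nat \<Rightarrow> pol set" where
  "JA n = ideal_gen ({var v | v. v \<notin> gensA n}
             \<union> {var (s, j) ^ 2 | s j. n < s \<and> s < 2 * n \<and> j < n}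
             \<union> {var (rho_var n) ^ 2}
             \<union> {var (n, j) ^ 2 - var (n, n - 1) ^ 2 | j. j < n})"

text \<open>The isomorphism statement: a ring homomorphism phi : pol -> pol with
  phi(h_{s,j}) = h_{s,j} (n<=s<2n) and phi(rho) = sum_j h_{2n,j}, landing in cycles,
  whose induced map pol/JA -> ZD/BD is well defined, injective and surjective.\<close>

definition E2_iso :: "nat \<Rightarrow> (pol \<Rightarrow> pol) \<Rightarrow> bool" where
  "E2_iso n \<phi> \<longleftrightarrow>
     (\<forall>x y. \<phi> (x + y) = \<phi> x + \<phi> y) \<and> (\<forall>x y. \<phi> (x * y) = \<phi> x * \<phi> y) \<and> \<phi> 1 = 1 \<and>
     (\<forall>s j. n \<le> s \<and> s < 2 * n \<and> j < n \<longrightarrow> \<phi> (var (s, j)) = var (s, j)) \<and>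
     \<phi> (var (rho_var n)) = (\<Sum>j<n. var (2 * n, j)) \<and>
     (\<forall>x. \<phi> x \<in> ZD n) \<and>
     (\<forall>x. \<phi> x \<in> BD n \<longleftrightarrow> x \<in> JA n) \<and>
     (\<forall>z\<in>ZD n. \<exists>x. \<phi> x - z \<in> BD n)"

end

theory Submission
  imports Defs
begin

lemma bit_add_self [simp]: "(c::bit) + c = 0" by (cases c) auto

lemma pol_add_self [simp]: "(p::pol) + p = 0"
  by (rule poly_mapping_eqI) (simp only: lookup_add bit_add_self lookup_zero)

lemma pol_minus_eq_plus: "(p::pol) - q = p + q"
proof -
  have "p - q = p - q + (q + q)" by (simp only: pol_add_self add_0_right)
  also have "\<dots> = (p - q + q) + q" by (simp only: add.assoc)
  also have "\<dots> = p + q" by simp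
  finally show ?thesis .
qed

lemma pol_uminus: "- (p::pol) = p"
  using pol_minus_eq_plus[of 0 p] by simp

definition monom :: "mon \<Rightarrow> pol" where "monom m = Poly_Mapping.single m 1"

definition lin :: "(mon \<Rightarrow> pol) \<Rightarrow> pol \<Rightarrow> pol" where
  "lin F p = (\<Sum>m\<in>Poly_Mapping.keys p. F m)"

lemma keys_lookup1: "m \<in> Poly_Mapping.keys (p::pol) \<Longrightarrow> Poly_Mapping.lookup p m = 1"
  by (simp add: in_keys_iff)

lemma pol_expand: "(p::pol) = (\<Sum>m\<in>Poly_Mapping.keys p. monom m)"
proof (rule poly_mapping_eqI)
  fix k
  show "Poly_Mapping.lookup p k = Poly_Mapping.lookup (\<Sum>m\<in>Poly_Mapping.keys p. monom m) k"
    unfolding lookup_sum monom_def lookup_single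
    by (cases "k \<in> Poly_Mapping.keys p") (auto simp: when_def in_keys_iff)
qed

lemma lin_add: "lin F (p + q) = lin F p + lin F q"
proof -
  define f where "f k (c::bit) = (if c = 0 then 0 else F k)" for k c
  have e: "lin F r = (\<Sum>k\<in>Poly_Mapping.keys r. f k (Poly_Mapping.lookup r k))" for r
    unfolding lin_def f_def by (rule sum.cong) (auto simp: in_keys_iff)
  show ?thesis unfolding e
    by (rule setsum_keys_plus_distrib) (auto simp: f_def)
qed

lemma lin_zero [simp]: "lin F 0 = 0" by (simp add: lin_def)

lemma lin_mono [simp]: "lin F (monom m) = F m" by (simp add: lin_def monom_def)

lemma lin_sum: "lin F (sum g S) = (\<Sum>x\<in>S. lin F (g x))"
  by (induction S rule: infinite_finite_induct) (auto simp: lin_add)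

lemma mono_add: "monom (a + b) = monom a * monom b"
  by (simp add: monom_def mult_single)

lemma mono_zero: "monom 0 = 1" by (simp add: monom_def)

lemma lin_mult: "lin F (p * q) = (\<Sum>a\<in>Poly_Mapping.keys p. \<Sum>b\<in>Poly_Mapping.keys q. F (a + b))"
proof -
  have "p * q = (\<Sum>a\<in>Poly_Mapping.keys p. monom a) * (\<Sum>b\<in>Poly_Mapping.keys q. monom b)"
    using pol_expand[of p] pol_expand[of q] by simp
  also have "\<dots> = (\<Sum>a\<in>Poly_Mapping.keys p. \<Sum>b\<in>Poly_Mapping.keys q. monom (a + b))"
    by (simp add: sum_product mono_add)
  finally show ?thesis by (simp add: lin_sum)
qed

lemma lin_alt: "lin F p = (\<Sum>m\<in>Poly_Mapping.keys p. F m)" by (simp add: lin_def)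

lemma lin_cong: "(\<And>m. F m = G m) \<Longrightarrow> lin F p = lin G p" by (simp add: lin_def)

definition hom :: "(pol \<Rightarrow> pol) \<Rightarrow> bool" where
  "hom f \<longleftrightarrow> (\<forall>x y. f (x + y) = f x + f y) \<and> (\<forall>x y. f (x * y) = f x * f y) \<and> f 1 = 1"

lemma lin_hom:
  assumes "\<And>a b. F (a + b) = F a * F b" "F 0 = 1"
  shows "hom (lin F)"
  unfolding hom_def
proof (intro conjI allI)
  fix x y
  show "lin F (x * y) = lin F x * lin F y"
    unfolding lin_mult assms(1) unfolding lin_alt sum_product ..
next
  fix x y show "lin F (x + y) = lin F x + lin F y" by (rule lin_add)
qed (auto simp: lin_def assms)

definition monev :: "(nat \<times> nat \<Rightarrow> pol) \<Rightarrow> mon \<Rightarrow> pol" where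
  "monev F m = (\<Prod>v\<in>Poly_Mapping.keys m. F v ^ Poly_Mapping.lookup m v)"

definition subst :: "(nat \<times> nat \<Rightarrow> pol) \<Rightarrow> pol \<Rightarrow> pol" where
  "subst F = lin (monev F)"

lemma keys_add_nat: "Poly_Mapping.keys (a + b :: mon) = Poly_Mapping.keys a \<union> Poly_Mapping.keys b"
  by (auto simp: in_keys_iff lookup_add)

lemma monev_superset:
  assumes "finite K" "Poly_Mapping.keys m \<subseteq> K"
  shows "monev F m = (\<Prod>v\<in>K. F v ^ Poly_Mapping.lookup m v)"
  unfolding monev_def
  by (rule prod.mono_neutral_left) (use assms in \<open>auto simp: in_keys_iff\<close>)

lemma monev_add: "monev F (a + b) = monev F a * monev F b"
proof -
  let ?K = "Poly_Mapping.keys a \<union> Poly_Mapping.keys b"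
  have "monev F (a + b) = (\<Prod>v\<in>?K. F v ^ Poly_Mapping.lookup (a+b) v)"
    by (rule monev_superset) (auto simp: keys_add_nat)
  also have "\<dots> = (\<Prod>v\<in>?K. F v ^ Poly_Mapping.lookup a v) * (\<Prod>v\<in>?K. F v ^ Poly_Mapping.lookup b v)"
    by (simp add: lookup_add power_add prod.distrib)
  also have "\<dots> = monev F a * monev F b"
    by (simp add: monev_superset[symmetric])
  finally show ?thesis .
qed

lemma monev_zero: "monev F 0 = 1" by (simp add: monev_def)

lemma hom_subst: "hom (subst F)"
  unfolding subst_def by (rule lin_hom) (auto simp: monev_add monev_zero)

lemma subst_var [simp]: "subst F (var v) = F v"
  by (simp add: subst_def var_def monev_def flip: monom_def)

lemma hom_add: "hom f \<Longrightarrow> f (x + y) = f x + f y" by (simp add: hom_def)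
lemma hom_mult: "hom f \<Longrightarrow> f (x * y) = f x * f y" by (simp add: hom_def)
lemma hom_one: "hom f \<Longrightarrow> f 1 = 1" by (simp add: hom_def)
lemma hom_zero: "hom f \<Longrightarrow> f 0 = 0"
  using hom_add[of f 0 0] by simp
lemma hom_power: "hom f \<Longrightarrow> f (x ^ k) = f x ^ k"
  by (induction k) (auto simp: hom_one hom_mult)
lemma hom_sum: "hom f \<Longrightarrow> f (sum g S) = (\<Sum>x\<in>S. f (g x))"
  by (induction S rule: infinite_finite_induct) (auto simp: hom_zero hom_add)
lemma hom_prod: "hom f \<Longrightarrow> f (prod g S) = (\<Prod>x\<in>S. f (g x))"
  by (induction S rule: infinite_finite_induct) (auto simp: hom_one hom_mult)
lemma hom_comp: "hom f \<Longrightarrow> hom g \<Longrightarrow> hom (f \<circ> g)"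
  by (simp add: hom_def)

lemma var_mono: "var v = monom (Poly_Mapping.single v 1)" by (simp add: var_def monom_def)

lemma mono_single_power: "monom (Poly_Mapping.single v k) = var v ^ k"
proof (induction k)
  case 0 then show ?case by (simp add: mono_zero)
next
  case (Suc k)
  have eq: "Poly_Mapping.single v (Suc k) = Poly_Mapping.single v 1 + Poly_Mapping.single v k"
    by (simp add: single_add[symmetric])
  show ?case by (simp only: eq mono_add Suc.IH var_mono power_Suc)
qed

lemma mon_expand: "(m::mon) = (\<Sum>v\<in>Poly_Mapping.keys m. Poly_Mapping.single v (Poly_Mapping.lookup m v))"
proof (rule poly_mapping_eqI)
  fix k
  show "Poly_Mapping.lookup m k = Poly_Mapping.lookup (\<Sum>v\<in>Poly_Mapping.keys m. Poly_Mapping.single v (Poly_Mapping.lookup m v)) k"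
    unfolding lookup_sum lookup_single
    by (cases "k \<in> Poly_Mapping.keys m") (auto simp: when_def in_keys_iff)
qed

lemma mono_sum: "monom (sum g S) = (\<Prod>x\<in>S. monom (g x))"
  by (induction S rule: infinite_finite_induct) (auto simp: mono_zero mono_add)

lemma mono_monev: "monom m = monev var m"
proof -
  have "monom m = monom (\<Sum>v\<in>Poly_Mapping.keys m. Poly_Mapping.single v (Poly_Mapping.lookup m v))"
    using mon_expand[of m] by simp
  also have "\<dots> = monev var m" by (simp add: mono_sum mono_single_power monev_def)
  finally show ?thesis .
qed

lemma pol_induct:
  assumes "P 0" "P 1" "\<And>v. P (var v)" "\<And>x y. P x \<Longrightarrow> P y \<Longrightarrow> P (x + y)"
    "\<And>x y. P x \<Longrightarrow> P y \<Longrightarrow> P (x * y)"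
  shows "P p"
proof -
  have pw: "P (x ^ k)" if "P x" for x k
    using that by (induction k) (auto intro: assms)
  have pr: "P (prod g S)" if "\<And>x. P (g x)" for g and S :: "'a set"
    using that by (induction S rule: infinite_finite_induct) (auto intro: assms)
  have sm: "P (sum g S)" if "\<And>x. P (g x)" for g and S :: "'a set"
    using that by (induction S rule: infinite_finite_induct) (auto intro: assms)
  have "P (monom m)" for m
    unfolding mono_monev monev_def by (intro pr pw assms)
  then have "P (\<Sum>m\<in>Poly_Mapping.keys p. monom m)" by (intro sm)
  then show ?thesis using pol_expand[of p] by simp
qed

lemma hom_unique:
  assumes "hom f" "hom g" "\<And>v. f (var v) = g (var v)"
  shows "f p = g p"
  by (induction p rule: pol_induct) (use assms in \<open>auto simp: hom_zero hom_one hom_add hom_mult\<close>)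

lemma subst_comp: "subst F (subst G p) = subst (\<lambda>v. subst F (G v)) p"
  by (rule hom_unique[where f="subst F \<circ> subst G", simplified]) (auto intro: hom_comp hom_subst)

lemma subst_id: "subst var p = p"
proof -
  have "hom id" by (simp add: hom_def)
  from hom_unique[OF hom_subst this] show ?thesis by simp
qed


section \<open>Ideals\<close>

lemma ideal_gen_zero: "0 \<in> ideal_gen G"
  unfolding ideal_gen_def by (rule CollectI, rule exI[of _ "{}"]) auto

lemma ideal_gen_gen: "g \<in> G \<Longrightarrow> g \<in> ideal_gen G"
  unfolding ideal_gen_def by (rule CollectI, rule exI[of _ "{g}"], rule exI[of _ "\<lambda>_. 1"]) auto

lemma ideal_gen_mult: "x \<in> ideal_gen G \<Longrightarrow> r * x \<in> ideal_gen G"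
proof -
  assume "x \<in> ideal_gen G"
  then obtain S f where S: "finite S" "S \<subseteq> G" "x = (\<Sum>g\<in>S. f g * g)" unfolding ideal_gen_def by auto
  then have "r * x = (\<Sum>g\<in>S. (r * f g) * g)" by (simp add: sum_distrib_left mult.assoc)
  with S show ?thesis unfolding ideal_gen_def
    by (intro CollectI exI[of _ S] exI[of _ "\<lambda>g. r * f g"]) simp
qed

lemma ideal_gen_mult2: "x \<in> ideal_gen G \<Longrightarrow> x * r \<in> ideal_gen G"
  using ideal_gen_mult[of x G r] by (simp add: mult.commute)

lemma ideal_gen_add: "x \<in> ideal_gen G \<Longrightarrow> y \<in> ideal_gen G \<Longrightarrow> x + y \<in> ideal_gen G"
proof -
  assume "x \<in> ideal_gen G" "y \<in> ideal_gen G"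
  then obtain S f T h where S: "finite S" "S \<subseteq> G" "x = (\<Sum>g\<in>S. f g * g)"
    and T: "finite T" "T \<subseteq> G" "y = (\<Sum>g\<in>T. h g * g)" unfolding ideal_gen_def by auto
  define k where "k g = (if g \<in> S then f g else 0) + (if g \<in> T then h g else 0)" for g
  have "(\<Sum>g\<in>S \<union> T. k g * g) = (\<Sum>g\<in>S \<union> T. (if g \<in> S then f g * g else 0) + (if g \<in> T then h g * g else 0))"
    unfolding k_def by (rule sum.cong) (auto simp: distrib_right)
  also have "\<dots> = (\<Sum>g\<in>S \<union> T. (if g \<in> S then f g * g else 0)) + (\<Sum>g\<in>S \<union> T. (if g \<in> T then h g * g else 0))"
    by (rule sum.distrib)
  also have "\<dots> = x + y"
  proof -
    have "(\<Sum>g\<in>S \<union> T. (if g \<in> S then f g * g else 0)) = (\<Sum>g\<in>S. f g * g)"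
      by (rule sum.mono_neutral_cong_right) (use S T in auto)
    moreover have "(\<Sum>g\<in>S \<union> T. (if g \<in> T then h g * g else 0)) = (\<Sum>g\<in>T. h g * g)"
      by (rule sum.mono_neutral_cong_right) (use S T in auto)
    ultimately show ?thesis using S T by simp
  qed
  finally show ?thesis using S T unfolding ideal_gen_def
    by (intro CollectI exI[of _ "S \<union> T"] exI[of _ k]) simp
qed

lemma ideal_gen_sum: "(\<And>i. i \<in> I \<Longrightarrow> g i \<in> ideal_gen G) \<Longrightarrow> sum g I \<in> ideal_gen G"
  by (induction I rule: infinite_finite_induct) (auto intro: ideal_gen_add ideal_gen_zero)

lemma ideal_gen_uminus: "x \<in> ideal_gen G \<Longrightarrow> - x \<in> ideal_gen G"
  using ideal_gen_mult[of x G "-1"] by simp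

lemma ideal_gen_diff: "x \<in> ideal_gen G \<Longrightarrow> y \<in> ideal_gen G \<Longrightarrow> x - y \<in> ideal_gen G"
  using ideal_gen_add[OF _ ideal_gen_uminus] by (simp)

lemma ideal_gen_induct:
  assumes "x \<in> ideal_gen G" "P 0" "\<And>a b. P a \<Longrightarrow> P b \<Longrightarrow> P (a + b)" "\<And>r g. g \<in> G \<Longrightarrow> P (r * g)"
  shows "P x"
proof -
  obtain S f where S: "finite S" "S \<subseteq> G" "x = (\<Sum>g\<in>S. f g * g)" using assms(1) unfolding ideal_gen_def by auto
  have "P (\<Sum>g\<in>S. f g * g)" using S(1,2)
    by (induction S rule: finite_induct) (auto intro: assms)
  thus ?thesis using S by simp
qed

lemma ideal_gen_hom:
  assumes "hom f" "x \<in> ideal_gen G" "\<And>g. g \<in> G \<Longrightarrow> f g \<in> ideal_gen H"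
  shows "f x \<in> ideal_gen H"
  using assms(2) by (rule ideal_gen_induct) (auto simp: hom_zero[OF assms(1)] hom_add[OF assms(1)] hom_mult[OF assms(1)]
      intro: ideal_gen_zero ideal_gen_add ideal_gen_mult assms(3))

section \<open>Derivations\<close>

definition dmon' :: "(nat \<times> nat \<Rightarrow> pol) \<Rightarrow> mon \<Rightarrow> pol" where
  "dmon' G m = (\<Sum>v\<in>Poly_Mapping.keys m. of_nat (Poly_Mapping.lookup m v) * monom (m - Poly_Mapping.single v 1) * G v)"

definition der :: "(nat \<times> nat \<Rightarrow> pol) \<Rightarrow> pol \<Rightarrow> pol" where
  "der G = lin (dmon' G)"

lemma dd_der: "dd n = der (dgen n)"
proof
  fix p
  have "dmon n m = dmon' (dgen n) m" for m unfolding dmon_def dmon'_def monom_def ..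
  then show "dd n p = der (dgen n) p"
    unfolding dd_def der_def lin_def by (intro sum.cong) (auto simp: in_keys_iff)
qed

lemma dmon'_superset:
  assumes "finite K" "Poly_Mapping.keys m \<subseteq> K"
  shows "dmon' G m = (\<Sum>v\<in>K. of_nat (Poly_Mapping.lookup m v) * monom (m - Poly_Mapping.single v 1) * G v)"
  unfolding dmon'_def
  by (rule sum.mono_neutral_left) (use assms in \<open>auto simp: in_keys_iff\<close>)

lemma mono_minus_shift:
  "(of_nat (Poly_Mapping.lookup a v) :: pol) * monom (a + b - Poly_Mapping.single v 1)
   = of_nat (Poly_Mapping.lookup a v) * monom (a - Poly_Mapping.single v 1) * monom b"
proof (cases "Poly_Mapping.lookup a v = 0")
  case False
  have "a + b - Poly_Mapping.single v 1 = (a - Poly_Mapping.single v 1) + b"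
    by (rule poly_mapping_eqI) (use False in \<open>auto simp: lookup_add lookup_minus lookup_single when_def\<close>)
  then show ?thesis by (simp add: mono_add mult.assoc)
qed simp

lemma dmon'_add: "dmon' G (a + b) = monom a * dmon' G b + dmon' G a * monom b"
proof -
  let ?K = "Poly_Mapping.keys a \<union> Poly_Mapping.keys b"
  let ?t = "\<lambda>m v. of_nat (Poly_Mapping.lookup m v) * monom (m - Poly_Mapping.single v 1) * G v"
  have "dmon' G (a + b) = (\<Sum>v\<in>?K. ?t (a + b) v)"
    by (rule dmon'_superset) (auto simp: keys_add_nat)
  also have "\<dots> = (\<Sum>v\<in>?K. ?t a v * monom b + monom a * ?t b v)"
  proof (rule sum.cong)
    fix v
    have 1: "(of_nat (Poly_Mapping.lookup a v) :: pol) * monom (a + b - Poly_Mapping.single v 1)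
      = of_nat (Poly_Mapping.lookup a v) * monom (a - Poly_Mapping.single v 1) * monom b"
      by (rule mono_minus_shift)
    have 2: "(of_nat (Poly_Mapping.lookup b v) :: pol) * monom (a + b - Poly_Mapping.single v 1)
      = of_nat (Poly_Mapping.lookup b v) * monom (b - Poly_Mapping.single v 1) * monom a"
      using mono_minus_shift[of b v a] by (simp add: add.commute)
    have "?t (a + b) v = (of_nat (Poly_Mapping.lookup a v) * monom (a + b - Poly_Mapping.single v 1)
       + of_nat (Poly_Mapping.lookup b v) * monom (a + b - Poly_Mapping.single v 1)) * G v"
      unfolding lookup_add of_nat_add distrib_right ..
    also have "\<dots> = (of_nat (Poly_Mapping.lookup a v) * monom (a - Poly_Mapping.single v 1) * monom b
       + of_nat (Poly_Mapping.lookup b v) * monom (b - Poly_Mapping.single v 1) * monom a) * G v"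
      unfolding 1 2 ..
    finally show "?t (a + b) v = ?t a v * monom b + monom a * ?t b v"
      by (simp add: algebra_simps)
  qed simp
  also have "\<dots> = (\<Sum>v\<in>?K. ?t a v) * monom b + monom a * (\<Sum>v\<in>?K. ?t b v)"
    by (simp add: sum.distrib sum_distrib_left sum_distrib_right)
  also have "\<dots> = monom a * dmon' G b + dmon' G a * monom b"
  proof -
    have ea: "dmon' G a = (\<Sum>v\<in>?K. ?t a v)" by (rule dmon'_superset) auto
    have eb: "dmon' G b = (\<Sum>v\<in>?K. ?t b v)" by (rule dmon'_superset) auto
    show ?thesis by (simp only: ea eb) (rule add.commute)
  qed
  finally show ?thesis .
qed

lemma der_add: "der G (p + q) = der G p + der G q"
  by (simp add: der_def lin_add)

lemma der_zero [simp]: "der G 0 = 0" by (simp add: der_def)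

lemma der_sum: "der G (sum g S) = (\<Sum>x\<in>S. der G (g x))"
  by (simp add: der_def lin_sum)

lemma der_mono: "der G (monom m) = dmon' G m" by (simp add: der_def)

lemma der_mult: "der G (p * q) = p * der G q + der G p * q"
proof -
  have "der G (p * q) = (\<Sum>a\<in>Poly_Mapping.keys p. \<Sum>b\<in>Poly_Mapping.keys q. monom a * dmon' G b + dmon' G a * monom b)"
    unfolding der_def lin_mult dmon'_add ..
  also have "\<dots> = (\<Sum>a\<in>Poly_Mapping.keys p. monom a) * (\<Sum>b\<in>Poly_Mapping.keys q. dmon' G b)
      + (\<Sum>a\<in>Poly_Mapping.keys p. dmon' G a) * (\<Sum>b\<in>Poly_Mapping.keys q. monom b)"
    by (simp add: sum.distrib sum_product)
  also have "\<dots> = p * der G q + der G p * q"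
    by (simp add: der_def lin_def flip: pol_expand)
  finally show ?thesis .
qed

lemma der_var [simp]: "der G (var v) = G v"
  by (simp add: var_mono der_mono dmon'_def mono_zero)

lemma der_one [simp]: "der G 1 = 0"
  by (simp flip: mono_zero add: der_mono dmon'_def)

lemma der_power2: "der G (x ^ 2) = 0"
  by (simp add: power2_eq_square der_mult mult.commute)

lemma twisted_unique:
  assumes f: "hom f"
    and a1: "\<And>x y. Da (x + y) = Da x + Da y" and a2: "\<And>x y. Db (x + y) = Db x + Db y"
    and m1: "\<And>x y. Da (x * y) = Da x * f y + f x * Da y"
    and m2: "\<And>x y. Db (x * y) = Db x * f y + f x * Db y"
    and v: "\<And>v. Da (var v) = Db (var v)"
  shows "Da p = Db p"
proof -
  have z1: "Da 0 = 0" using a1[of 0 0] by simp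
  have z2: "Db 0 = 0" using a2[of 0 0] by simp
  have o1: "Da 1 = 0" using m1[of 1 1] by (simp add: hom_one[OF f])
  have o2: "Db 1 = 0" using m2[of 1 1] by (simp add: hom_one[OF f])
  show ?thesis
  proof (induction p rule: pol_induct)
    case (4 x y) then show ?case by (simp only: a1 a2)
  next
    case (5 x y) then show ?case by (simp only: m1 m2)
  qed (simp_all only: z1 z2 o1 o2 v)
qed

lemma der_subst_conj:
  assumes "\<And>v. der G (S v) = subst S (H v)"
  shows "der G (subst S p) = subst S (der H p)"
proof -
  have h: "hom (subst S)" by (rule hom_subst)
  show ?thesis
  proof (rule twisted_unique[where Da="\<lambda>p. der G (subst S p)" and Db="\<lambda>p. subst S (der H p)", OF h])
    fix x y
    show "der G (subst S (x + y)) = der G (subst S x) + der G (subst S y)"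
      by (simp only: hom_add[OF h] der_add)
    show "subst S (der H (x + y)) = subst S (der H x) + subst S (der H y)"
      by (simp only: hom_add[OF h] der_add)
    show "der G (subst S (x * y)) = der G (subst S x) * subst S y + subst S x * der G (subst S y)"
      by (simp only: hom_mult[OF h] der_mult add.commute)
    show "subst S (der H (x * y)) = subst S (der H x) * subst S y + subst S x * subst S (der H y)"
      by (simp only: hom_mult[OF h] hom_add[OF h] der_mult add.commute)
  next
    fix v show "der G (subst S (var v)) = subst S (der H (var v))"
      by (simp add: assms)
  qed
qed


lemma two_pol [simp]: "(2::pol) = 0"
  by (metis one_add_one pol_add_self)

lemma frob: "((a::pol) + b) ^ 2 = a ^ 2 + b ^ 2"
  by (simp add: power2_eq_square algebra_simps)

lemma frob_sum: "(sum (g :: 'a \<Rightarrow> pol) S) ^ 2 = (\<Sum>i\<in>S. g i ^ 2)"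
  by (induction S rule: infinite_finite_induct) (auto simp: frob)

lemma telescope: "(j::nat) \<le> k \<Longrightarrow> (\<Sum>i\<in>{j+1..k}. (g (i - 1) + g i :: pol)) = g j + g k"
proof (induction k rule: dec_induct)
  case base then show ?case by simp
next
  case (step k)
  have "{j+1..Suc k} = insert (Suc k) {j+1..k}" using step by auto
  then show ?case using step by (simp add: algebra_simps)
qed

lemma mon_split: assumes "k \<le> Poly_Mapping.lookup (m::mon) v" shows "m = (m - Poly_Mapping.single v k) + Poly_Mapping.single v k"
proof (rule poly_mapping_eqI)
  fix w show "Poly_Mapping.lookup m w = Poly_Mapping.lookup (m - Poly_Mapping.single v k + Poly_Mapping.single v k) w"
    using assms by (cases "w = v") (simp_all add: lookup_add lookup_minus lookup_single when_def)
qed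

lemma mono_split: "k \<le> Poly_Mapping.lookup m v \<Longrightarrow> monom m = monom (m - Poly_Mapping.single v k) * var v ^ k"
  using mon_split[of k m v] by (metis mono_add mono_single_power)

lemma keys_mono: "Poly_Mapping.keys (monom m) = {m}" by (simp add: monom_def)

section \<open>The ideal ID\<close>

definition Bad :: "nat \<Rightarrow> mon \<Rightarrow> bool" where
  "Bad n m \<longleftrightarrow> (\<exists>v\<in>Poly_Mapping.keys m. v \<notin> gensD n) \<or>
     (\<exists>s j. n < s \<and> s \<le> 2 * n \<and> j < n \<and> 2 \<le> Poly_Mapping.lookup m (s, j))"

lemma Bad_add: assumes "Bad n a" shows "Bad n (a + b)"
  using assms unfolding Bad_def
proof (elim disjE exE bexE conjE)
  fix v assume "v \<in> Poly_Mapping.keys a" "v \<notin> gensD n"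
  then show "(\<exists>v\<in>Poly_Mapping.keys (a + b). v \<notin> gensD n) \<or>
    (\<exists>s j. n < s \<and> s \<le> 2 * n \<and> j < n \<and> 2 \<le> Poly_Mapping.lookup (a + b) (s, j))"
    by (intro disjI1 bexI[of _ v]) (auto simp: keys_add_nat)
next
  fix s j assume h: "n < s" "s \<le> 2 * n" "j < n" "2 \<le> Poly_Mapping.lookup a (s, j)"
  then show "(\<exists>v\<in>Poly_Mapping.keys (a + b). v \<notin> gensD n) \<or>
    (\<exists>s j. n < s \<and> s \<le> 2 * n \<and> j < n \<and> 2 \<le> Poly_Mapping.lookup (a + b) (s, j))"
    by (intro disjI2 exI[of _ s] exI[of _ j]) (auto simp: lookup_add)
qed

lemma Bad_mono_ID: "Bad n m \<Longrightarrow> monom m \<in> ID n"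
  unfolding Bad_def
proof (elim disjE exE bexE conjE)
  fix v assume v: "v \<in> Poly_Mapping.keys m" "v \<notin> gensD n"
  have "monom m = monom (m - Poly_Mapping.single v 1) * var v ^ 1"
    by (rule mono_split) (use v in \<open>auto simp: in_keys_iff\<close>)
  moreover have "var v \<in> ID n" unfolding ID_def
  proof (rule ideal_gen_gen, rule UnI1)
    show "var v \<in> {var v |v. v \<notin> gensD n}" using v(2) by blast
  qed
  ultimately show "monom m \<in> ID n" by (simp add: ideal_gen_mult ID_def)
next
  fix s j assume h: "n < s" "s \<le> 2 * n" "j < n" "2 \<le> Poly_Mapping.lookup m (s, j)"
  have "monom m = monom (m - Poly_Mapping.single (s,j) 2) * var (s,j) ^ 2"
    by (rule mono_split) (use h in auto)
  moreover have "var (s,j) ^ 2 \<in> ID n" unfolding ID_def by (rule ideal_gen_gen) (use h in auto)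
  ultimately show "monom m \<in> ID n" by (simp add: ideal_gen_mult ID_def)
qed

lemma ID_iff: "p \<in> ID n \<longleftrightarrow> (\<forall>m\<in>Poly_Mapping.keys p. Bad n m)"
proof
  assume "p \<in> ID n"
  then show "\<forall>m\<in>Poly_Mapping.keys p. Bad n m" unfolding ID_def
  proof (rule ideal_gen_induct)
    fix a b :: pol assume "\<forall>m\<in>Poly_Mapping.keys a. Bad n m" "\<forall>m\<in>Poly_Mapping.keys b. Bad n m"
    then show "\<forall>m\<in>Poly_Mapping.keys (a + b). Bad n m" using keys_add[of a b] by blast
  next
    fix r g assume g: "g \<in> {var v |v. v \<notin> gensD n} \<union> {var (s, j) ^ 2 |s j. n < s \<and> s \<le> 2 * n \<and> j < n}"
    obtain g0 where g0: "g = monom g0" "Bad n g0"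
      using g
    proof (elim UnE CollectE exE conjE)
      fix v assume "g = var v" "v \<notin> gensD n"
      moreover have "Bad n (Poly_Mapping.single v 1)" unfolding Bad_def
        by (intro disjI1 bexI[of _ v]) (use \<open>v \<notin> gensD n\<close> in auto)
      ultimately show ?thesis using that[of "Poly_Mapping.single v 1"] by (simp add: var_mono)
    next
      fix s j assume h: "g = var (s, j) ^ 2" "n < s" "s \<le> 2 * n" "j < n"
      moreover have "Bad n (Poly_Mapping.single (s,j) 2)" unfolding Bad_def
        by (intro disjI2 exI[of _ s] exI[of _ j]) (use h in auto)
      ultimately show ?thesis using that[of "Poly_Mapping.single (s,j) 2"]
        by (simp add: mono_single_power)
    qed
    show "\<forall>m\<in>Poly_Mapping.keys (r * g). Bad n m"
    proof
      fix m assume "m \<in> Poly_Mapping.keys (r * g)"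
      then obtain a where "m = a + g0" using keys_mult[of r g] g0 by (auto simp: keys_mono)
      then show "Bad n m" using Bad_add[OF g0(2), of a] by (simp add: add.commute)
    qed
  qed simp
next
  assume "\<forall>m\<in>Poly_Mapping.keys p. Bad n m"
  then have "(\<Sum>m\<in>Poly_Mapping.keys p. monom m) \<in> ID n"
    unfolding ID_def by (intro ideal_gen_sum) (use Bad_mono_ID[unfolded ID_def] in blast)
  then show "p \<in> ID n" using pol_expand[of p] by simp
qed

lemma ID_add: "a \<in> ID n \<Longrightarrow> b \<in> ID n \<Longrightarrow> a + b \<in> ID n"
  unfolding ID_def by (rule ideal_gen_add)
lemma ID_mult: "a \<in> ID n \<Longrightarrow> r * a \<in> ID n"
  unfolding ID_def by (rule ideal_gen_mult)
lemma ID_mult2: "a \<in> ID n \<Longrightarrow> a * r \<in> ID n"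
  unfolding ID_def by (rule ideal_gen_mult2)
lemma ID_zero: "0 \<in> ID n" unfolding ID_def by (rule ideal_gen_zero)
lemma ID_sum: "(\<And>i. i \<in> I \<Longrightarrow> g i \<in> ID n) \<Longrightarrow> sum g I \<in> ID n"
  unfolding ID_def by (rule ideal_gen_sum)

lemma JA_add: "a \<in> JA n \<Longrightarrow> b \<in> JA n \<Longrightarrow> a + b \<in> JA n"
  unfolding JA_def by (rule ideal_gen_add)
lemma JA_mult: "a \<in> JA n \<Longrightarrow> r * a \<in> JA n"
  unfolding JA_def by (rule ideal_gen_mult)
lemma JA_mult2: "a \<in> JA n \<Longrightarrow> a * r \<in> JA n"
  unfolding JA_def by (rule ideal_gen_mult2)
lemma JA_zero: "0 \<in> JA n" unfolding JA_def by (rule ideal_gen_zero)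
lemma JA_sum: "(\<And>i. i \<in> I \<Longrightarrow> g i \<in> JA n) \<Longrightarrow> sum g I \<in> JA n"
  unfolding JA_def by (rule ideal_gen_sum)


definition X :: "nat \<Rightarrow> nat \<Rightarrow> pol" where "X n j = var (n, j)"
definition Y :: "nat \<Rightarrow> nat \<Rightarrow> pol" where "Y n j = var (2 * n, j)"
definition Ysum :: "nat \<Rightarrow> pol" where "Ysum n = (\<Sum>j<n. Y n j)"

definition Phi :: "nat \<Rightarrow> nat \<times> nat \<Rightarrow> pol" where
  "Phi n v = (if v = rho_var n then Ysum n else if v \<in> gensA n then var v else 0)"
definition phi :: "nat \<Rightarrow> pol \<Rightarrow> pol" where "phi n = subst (Phi n)"

lemma dd_var: "dd n (var v) = dgen n v" by (simp add: dd_der)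
lemma dd_add: "dd n (a + b) = dd n a + dd n b" by (simp add: dd_der der_add)
lemma dd_mult: "dd n (a * b) = a * dd n b + dd n a * b" by (simp add: dd_der der_mult)
lemma dd_zero [simp]: "dd n 0 = 0" by (simp add: dd_der)
lemma dd_sum: "dd n (sum g S) = (\<Sum>i\<in>S. dd n (g i))" by (simp add: dd_der der_sum)

lemma prev_0: "n \<ge> 1 \<Longrightarrow> prev n 0 = n - 1" by (simp add: prev_def)
lemma prev_pos: "1 \<le> j \<Longrightarrow> j < n \<Longrightarrow> prev n j = j - 1"
  by (simp add: prev_def) (metis Nat.add_diff_assoc2 add.commute mod_add_self2 mod_less less_imp_diff_less)

lemma dd_Y: "j < n \<Longrightarrow> dd n (Y n j) = X n (prev n j) ^ 2 + X n j ^ 2"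
  by (simp add: Y_def X_def dd_var dgen_def)

lemma dd_X: "n \<ge> 1 \<Longrightarrow> dd n (X n j) = 0"
  by (simp add: X_def dd_var dgen_def)

lemma sum_prev: "n \<ge> 1 \<Longrightarrow> (\<Sum>j<n. (g (prev n j) :: pol)) = (\<Sum>j<n. g j)"
proof -
  assume "n \<ge> 1"
  then obtain k where k: "n = Suc k" by (cases n) auto
  have "(\<Sum>j<Suc k. g (prev n j)) = g (prev n 0) + (\<Sum>j<k. g (prev n (Suc j)))"
    by (rule sum.lessThan_Suc_shift)
  also have "\<dots> = g k + (\<Sum>j<k. g j)"
    using k by (simp add: prev_0 prev_pos)
  also have "\<dots> = (\<Sum>j<Suc k. g j)" by simp
  finally show ?thesis using k by simp
qed

lemma dd_Ysum: "n \<ge> 1 \<Longrightarrow> dd n (Ysum n) = 0"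
proof -
  assume n: "n \<ge> 1"
  have "dd n (Ysum n) = (\<Sum>j<n. X n (prev n j) ^ 2) + (\<Sum>j<n. X n j ^ 2)"
    by (simp add: Ysum_def dd_sum dd_Y sum.distrib)
  also have "\<dots> = 0" using sum_prev[OF n, of "\<lambda>j. X n j ^ 2"] by simp
  finally show ?thesis .
qed

lemma Y_sq_ID: "n \<ge> 1 \<Longrightarrow> j < n \<Longrightarrow> Y n j ^ 2 \<in> ID n"
  unfolding ID_def Y_def
proof (rule ideal_gen_gen, rule UnI2)
  assume "n \<ge> 1" "j < n"
  then show "var (2 * n, j) ^ 2 \<in> {var (s, j) ^ 2 |s j. n < s \<and> s \<le> 2 * n \<and> j < n}" by force
qed

lemma Ysum_sq: "n \<ge> 1 \<Longrightarrow> Ysum n ^ 2 \<in> ID n"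
  unfolding Ysum_def frob_sum by (rule ID_sum) (simp add: Y_sq_ID)

lemma hom_phi: "hom (phi n)" by (simp add: phi_def hom_subst)

lemma rho_in_gensA: "n \<ge> 1 \<Longrightarrow> rho_var n \<in> gensA n" by (simp add: gensA_def)

lemma gensA_sub_gensD: "n \<ge> 1 \<Longrightarrow> v \<in> gensA n \<Longrightarrow> v \<in> gensD n"
  by (auto simp: gensA_def gensD_def rho_var_def)

lemma phi_var_gen: "n \<le> s \<Longrightarrow> s < 2 * n \<Longrightarrow> j < n \<Longrightarrow> phi n (var (s, j)) = var (s, j)"
  by (simp add: phi_def Phi_def rho_var_def gensA_def)

lemma phi_rho: "phi n (var (rho_var n)) = Ysum n"
  by (simp add: phi_def Phi_def)

lemma dd_Phi: "n \<ge> 1 \<Longrightarrow> dd n (Phi n v) = 0"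
  unfolding Phi_def
  by (auto simp: dd_Ysum dd_var dgen_def gensA_def rho_var_def)

lemma phi_cycle: "n \<ge> 1 \<Longrightarrow> dd n (phi n p) \<in> ID n"
proof (induction p rule: pol_induct)
  case 1 then show ?case by (simp add: hom_zero[OF hom_phi] ID_zero)
next
  case 2 then show ?case by (simp add: hom_one[OF hom_phi] dd_der ID_zero)
next
  case (3 v) then show ?case by (simp add: phi_def dd_Phi ID_zero)
next
  case (4 x y) then show ?case by (simp add: hom_add[OF hom_phi] dd_add ID_add)
next
  case (5 x y) then show ?case by (simp add: hom_mult[OF hom_phi] dd_mult ID_add ID_mult ID_mult2)
qed

section \<open>JA maps to boundaries\<close>

lemma BD_add: "a \<in> BD n \<Longrightarrow> b \<in> BD n \<Longrightarrow> a + b \<in> BD n"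
proof -
  assume "a \<in> BD n" "b \<in> BD n"
  then obtain y1 i1 y2 i2 where "a = dd n y1 + i1" "i1 \<in> ID n" "b = dd n y2 + i2" "i2 \<in> ID n"
    unfolding BD_def by auto
  then have "a + b = dd n (y1 + y2) + (i1 + i2)" "i1 + i2 \<in> ID n" by (simp_all add: dd_add ID_add algebra_simps)
  then show ?thesis unfolding BD_def by (intro CollectI exI[of _ "y1 + y2"] exI[of _ "i1 + i2"]) simp
qed

lemma ID_BD: "i \<in> ID n \<Longrightarrow> i \<in> BD n"
  unfolding BD_def by (rule CollectI, rule exI[of _ 0], rule exI[of _ i]) simp

lemma dd_BD: "dd n w \<in> BD n"
  unfolding BD_def by (rule CollectI, rule exI[of _ w], rule exI[of _ 0]) (simp add: ID_zero)

lemma cycle_mult_BD: "dd n c \<in> ID n \<Longrightarrow> b \<in> BD n \<Longrightarrow> c * b \<in> BD n"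
proof -
  assume c: "dd n c \<in> ID n" and "b \<in> BD n"
  then obtain w i where b: "b = dd n w + i" "i \<in> ID n" unfolding BD_def by auto
  have "c * b = dd n (c * w) + (dd n c * w + c * i)"
    by (simp add: b dd_mult algebra_simps pol_minus_eq_plus)
  moreover have "dd n c * w + c * i \<in> ID n" using c b by (simp add: ID_add ID_mult ID_mult2)
  ultimately show ?thesis unfolding BD_def by (intro CollectI exI[of _ "c * w"] exI[of _ "dd n c * w + c * i"]) simp
qed

lemma X_sq_diff: "j < n \<Longrightarrow> X n j ^ 2 - X n (n - 1) ^ 2 = dd n (\<Sum>i\<in>{j+1..n-1}. Y n i)"
proof -
  assume j: "j < n"
  have "dd n (\<Sum>i\<in>{j+1..n-1}. Y n i) = (\<Sum>i\<in>{j+1..n-1}. X n (i - 1) ^ 2 + X n i ^ 2)"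
    unfolding dd_sum by (rule sum.cong) (auto simp: dd_Y prev_pos)
  also have "\<dots> = X n j ^ 2 + X n (n - 1) ^ 2"
    by (rule telescope[of j "n - 1" "\<lambda>i. X n i ^ 2"]) (use j in auto)
  finally show ?thesis by (simp add: pol_minus_eq_plus)
qed

lemma JA_phi_BD: "n \<ge> 1 \<Longrightarrow> x \<in> JA n \<Longrightarrow> phi n x \<in> BD n"
proof -
  assume n: "n \<ge> 1" and "x \<in> JA n"
  show ?thesis using \<open>x \<in> JA n\<close> unfolding JA_def
  proof (rule ideal_gen_induct[where P="\<lambda>x. phi n x \<in> BD n"])
    show "phi n 0 \<in> BD n" by (simp add: hom_zero[OF hom_phi] ID_BD ID_zero)
  next
    fix a b assume "phi n a \<in> BD n" "phi n b \<in> BD n"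
    then show "phi n (a + b) \<in> BD n" by (simp add: hom_add[OF hom_phi] BD_add)
  next
    fix r g assume g: "g \<in> {var v |v. v \<notin> gensA n}
             \<union> {var (s, j) ^ 2 | s j. n < s \<and> s < 2 * n \<and> j < n}
             \<union> {var (rho_var n) ^ 2}
             \<union> {var (n, j) ^ 2 - var (n, n - 1) ^ 2 | j. j < n}"
    have "phi n g \<in> BD n" using g
    proof (elim UnE CollectE exE conjE insertE)
      fix v assume "g = var v" "v \<notin> gensA n"
      then show ?thesis using rho_in_gensA[OF n] by (auto simp: phi_def Phi_def ID_BD ID_zero)
    next
      fix s j assume h: "g = var (s, j) ^ 2" "n < s" "s < 2 * n" "j < n"
      then have "phi n g = var (s,j) ^ 2" by (simp add: hom_power[OF hom_phi] phi_var_gen)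
      moreover have "var (s,j) ^ 2 \<in> ID n" unfolding ID_def
      proof (rule ideal_gen_gen, rule UnI2)
        show "var (s, j) ^ 2 \<in> {var (s, j) ^ 2 |s j. n < s \<and> s \<le> 2 * n \<and> j < n}" using h by force
      qed
      ultimately show ?thesis by (simp add: ID_BD)
    next
      assume "g = var (rho_var n) ^ 2"
      then show ?thesis using n by (simp add: hom_power[OF hom_phi] phi_rho Ysum_sq ID_BD)
    next
      fix j assume h: "g = var (n, j) ^ 2 - var (n, n - 1) ^ 2" "j < n"
      then have "phi n g = X n j ^ 2 - X n (n - 1) ^ 2"
        using n by (simp add: pol_minus_eq_plus hom_add[OF hom_phi] hom_power[OF hom_phi] phi_var_gen X_def)
      then show ?thesis using X_sq_diff[OF h(2)] dd_BD by metis
    qed simp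
    then show "phi n (r * g) \<in> BD n"
      by (simp add: hom_mult[OF hom_phi] cycle_mult_BD phi_cycle[OF n])
  qed
qed


definition goodY :: "nat \<Rightarrow> mon \<Rightarrow> bool" where
  "goodY n m \<longleftrightarrow> (\<forall>j. 1 \<le> j \<and> j < n \<longrightarrow> Poly_Mapping.lookup m (2 * n, j) = 0) \<and> Poly_Mapping.lookup m (2 * n, 0) \<le> 1"

definition pi :: "nat \<Rightarrow> pol \<Rightarrow> pol" where
  "pi n = lin (\<lambda>m. if goodY n m then monom m else 0)"

definition yfree :: "nat \<Rightarrow> mon \<Rightarrow> bool" where
  "yfree n m \<longleftrightarrow> Poly_Mapping.lookup m (2 * n, 0) = 0 \<and> (\<forall>j<n. Poly_Mapping.lookup m (2 * n, j) = 0)"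

definition yfreeP :: "nat \<Rightarrow> pol \<Rightarrow> bool" where
  "yfreeP n f \<longleftrightarrow> (\<forall>b\<in>Poly_Mapping.keys f. yfree n b)"

lemma JA_ext_sq: "n < s \<Longrightarrow> s < 2 * n \<Longrightarrow> j < n \<Longrightarrow> var (s, j) ^ 2 \<in> JA n"
  unfolding JA_def by (rule ideal_gen_gen) blast

lemma pi_add: "pi n (a + b) = pi n a + pi n b" by (simp add: pi_def lin_add)
lemma pi_sum: "pi n (sum g S) = (\<Sum>i\<in>S. pi n (g i))" by (simp add: pi_def lin_sum)
lemma pi_zero [simp]: "pi n 0 = 0" by (simp add: pi_def)

lemma goodY_shift: "yfree n b \<Longrightarrow> goodY n (b + c) = goodY n c"
  by (simp add: goodY_def yfree_def lookup_add)

lemma pi_mono_mult: assumes "yfree n b" shows "pi n (monom b * q) = monom b * pi n q"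
proof -
  have "pi n (monom b * q) = (\<Sum>c\<in>Poly_Mapping.keys q. if goodY n (b + c) then monom (b + c) else 0)"
    unfolding pi_def lin_mult keys_mono by simp
  also have "\<dots> = (\<Sum>c\<in>Poly_Mapping.keys q. monom b * (if goodY n c then monom c else 0))"
    by (rule sum.cong) (auto simp: goodY_shift[OF assms] mono_add)
  also have "\<dots> = monom b * pi n q"
    by (simp add: pi_def lin_def sum_distrib_left)
  finally show ?thesis .
qed

lemma pi_yfree_mult: assumes "yfreeP n f" shows "pi n (f * q) = f * pi n q"
proof -
  have "pi n (f * q) = pi n (\<Sum>b\<in>Poly_Mapping.keys f. monom b * q)"
    by (subst pol_expand[of f]) (simp add: sum_distrib_right)
  also have "\<dots> = (\<Sum>b\<in>Poly_Mapping.keys f. monom b * pi n q)"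
    unfolding pi_sum using assms by (intro sum.cong) (auto simp: yfreeP_def pi_mono_mult)
  also have "\<dots> = f * pi n q"
    by (subst (2) pol_expand[of f]) (simp add: sum_distrib_right)
  finally show ?thesis .
qed

lemma Y_sq_mono: "Y n j ^ 2 = monom (Poly_Mapping.single (2 * n, j) 2)"
  by (simp add: Y_def mono_single_power)

lemma pi_Ysq: "j < n \<Longrightarrow> pi n (Y n j ^ 2 * q) = 0"
proof -
  assume j: "j < n"
  have "\<not> goodY n (Poly_Mapping.single (2 * n, j) 2 + c)" for c
  proof
    assume g: "goodY n (Poly_Mapping.single (2 * n, j) 2 + c)"
    have "2 \<le> Poly_Mapping.lookup (Poly_Mapping.single (2 * n, j) 2 + c) (2 * n, j)" by (simp add: lookup_add)
    then show False using g j unfolding goodY_def by (cases "j = 0") force+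
  qed
  then show ?thesis unfolding Y_sq_mono pi_def lin_mult keys_mono by simp
qed

lemma pi_one: "pi n 1 = 1"
  by (simp add: pi_def flip: mono_zero) (simp add: goodY_def mono_zero)

lemma pi_Y: "j < n \<Longrightarrow> pi n (Y n j) = (if j = 0 then Y n 0 else 0)"
  by (simp add: pi_def Y_def var_mono goodY_def lookup_single when_def)

lemma pi_Ysum: "n \<ge> 1 \<Longrightarrow> pi n (Ysum n) = Y n 0"
proof -
  assume "n \<ge> 1"
  have "pi n (Ysum n) = (\<Sum>j<n. if j = 0 then Y n 0 else 0)"
    unfolding Ysum_def pi_sum by (rule sum.cong) (auto simp: pi_Y)
  also have "\<dots> = Y n 0" using \<open>n \<ge> 1\<close> by (simp add: sum.delta)
  finally show ?thesis .
qed

lemma yfreeP_add: "yfreeP n a \<Longrightarrow> yfreeP n b \<Longrightarrow> yfreeP n (a + b)"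
  unfolding yfreeP_def using keys_add[of a b] by blast

lemma yfreeP_mono: "yfree n b \<Longrightarrow> yfreeP n (monom b)"
  by (simp add: yfreeP_def keys_mono)

lemma yfreeP_X_sq: "n \<ge> 1 \<Longrightarrow> yfreeP n (X n i ^ 2)"
  by (simp add: X_def mono_single_power[symmetric] yfreeP_mono yfree_def lookup_single when_def)

lemma JA_gen_sq: "j < n \<Longrightarrow> var (n, j) ^ 2 - var (n, n - 1) ^ 2 \<in> JA n"
  unfolding JA_def by (rule ideal_gen_gen) blast

lemma JA_f: "n \<ge> 1 \<Longrightarrow> j < n \<Longrightarrow> X n (prev n j) ^ 2 + X n j ^ 2 \<in> JA n"
proof -
  assume n: "n \<ge> 1" and j: "j < n"
  have p: "prev n j < n" using n by (simp add: prev_def)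
  have eq: "var (n, prev n j) ^ 2 + var (n, j) ^ 2 = (var (n, prev n j) ^ 2 - var (n, n-1) ^ 2) + (var (n, j) ^ 2 - var (n, n-1) ^ 2)"
    by (simp add: pol_minus_eq_plus algebra_simps)
  show ?thesis unfolding X_def eq by (rule JA_add[OF JA_gen_sq[OF p] JA_gen_sq[OF j]])
qed

lemma pi_dd: assumes n: "n \<ge> 1" shows "pi n (dd n y) \<in> JA n"
proof -
  have "pi n (dd n y) = (\<Sum>m\<in>Poly_Mapping.keys y. \<Sum>v\<in>Poly_Mapping.keys m.
      pi n (of_nat (Poly_Mapping.lookup m v) * monom (m - Poly_Mapping.single v 1) * dgen n v))"
    unfolding dd_der der_def lin_def pi_sum dmon'_def ..
  also have "\<dots> \<in> JA n"
  proof (intro JA_sum)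
    fix m v
    show "pi n (of_nat (Poly_Mapping.lookup m v) * monom (m - Poly_Mapping.single v 1) * dgen n v) \<in> JA n"
    proof (cases "fst v = 2 * n \<and> snd v < n")
      case True
      let ?f = "X n (prev n (snd v)) ^ 2 + X n (snd v) ^ 2"
      have eq: "dgen n v = ?f" using True by (simp add: dgen_def X_def)
      have yf: "yfreeP n ?f" using n by (intro yfreeP_add yfreeP_X_sq)
      let ?A = "of_nat (Poly_Mapping.lookup m v) * monom (m - Poly_Mapping.single v 1)"
      have "pi n (?A * ?f) = pi n (?f * ?A)" by (simp only: mult.commute)
      also have "\<dots> = ?f * pi n ?A" by (rule pi_yfree_mult[OF yf])
      finally show ?thesis unfolding eq using JA_mult2[OF JA_f[OF n], of "snd v"] True by simp
    next
      case False
      have "dgen n v = 0" unfolding dgen_def by (rule if_not_P[OF False])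
      then show ?thesis by (simp add: JA_zero)
    qed
  qed
  finally show ?thesis .
qed

lemma var_notin_gensD_JA: "n \<ge> 1 \<Longrightarrow> v \<notin> gensD n \<Longrightarrow> var v \<in> JA n"
  unfolding JA_def
proof (rule ideal_gen_gen, intro UnI1)
  assume "n \<ge> 1" "v \<notin> gensD n"
  then have "v \<notin> gensA n" using gensA_sub_gensD by blast
  then show "var v \<in> {var v |v. v \<notin> gensA n}" by blast
qed

lemma yfreeP_var: "n \<ge> 1 \<Longrightarrow> v \<notin> gensD n \<Longrightarrow> yfreeP n (var v)"
  by (auto simp: var_mono yfreeP_def keys_mono yfree_def lookup_single when_def gensD_def)

lemma pi_ID: assumes n: "n \<ge> 1" and i: "i \<in> ID n" shows "pi n i \<in> JA n"
  using i unfolding ID_def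
proof (rule ideal_gen_induct[where P="\<lambda>x. pi n x \<in> JA n"])
  show "pi n 0 \<in> JA n" by (simp add: JA_zero)
next
  fix a b assume "pi n a \<in> JA n" "pi n b \<in> JA n"
  then show "pi n (a + b) \<in> JA n" by (simp add: pi_add JA_add)
next
  fix r g assume "g \<in> {var v |v. v \<notin> gensD n} \<union> {var (s, j) ^ 2 |s j. n < s \<and> s \<le> 2 * n \<and> j < n}"
  then show "pi n (r * g) \<in> JA n"
  proof (elim UnE CollectE exE conjE)
    fix v assume h: "g = var v" "v \<notin> gensD n"
    then show ?thesis using n
      by (simp add: mult.commute[of r] pi_yfree_mult yfreeP_var var_notin_gensD_JA JA_mult2)
  next
    fix s j assume h: "g = var (s, j) ^ 2" "n < s" "s \<le> 2 * n" "j < n"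
    show ?thesis
    proof (cases "s = 2 * n")
      case True
      then show ?thesis using h by (simp add: mult.commute[of r] pi_Ysq flip: Y_def add: JA_zero)
    next
      case False
      have yf: "yfreeP n g" using h False
        by (simp add: mono_single_power[symmetric] yfreeP_mono yfree_def lookup_single when_def)
      have "g \<in> JA n" using h False by (simp add: JA_ext_sq)
      then show ?thesis using yf by (simp add: mult.commute[of r] pi_yfree_mult JA_mult2)
    qed
  qed
qed


lemma phi_mono: "phi n (monom m) = monev (Phi n) m"
  by (simp add: phi_def subst_def)

lemma JA_var: "v \<notin> gensA n \<Longrightarrow> var v \<in> JA n"
  unfolding JA_def by (rule ideal_gen_gen) blast

lemma JA_rho_sq: "var (rho_var n) ^ 2 \<in> JA n"
  unfolding JA_def by (rule ideal_gen_gen) blast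

lemma pi_Ysum_pow: assumes n: "n \<ge> 1"
  shows "pi n (Ysum n ^ k) = (if k = 0 then 1 else if k = 1 then Y n 0 else 0)"
proof (cases "k \<ge> 2")
  case True
  have "Ysum n ^ k = (\<Sum>j<n. Y n j ^ 2 * Ysum n ^ (k - 2))"
  proof -
    have "Ysum n ^ k = Ysum n ^ (2 + (k - 2))" by (simp only: le_add_diff_inverse[OF True])
    also have "\<dots> = Ysum n ^ 2 * Ysum n ^ (k - 2)" by (rule power_add)
    finally have "Ysum n ^ k = Ysum n ^ 2 * Ysum n ^ (k - 2)" .
    then show ?thesis unfolding Ysum_def frob_sum by (simp add: sum_distrib_right)
  qed
  then have "pi n (Ysum n ^ k) = 0" by (simp add: pi_sum pi_Ysq)
  then show ?thesis using True by simp
next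
  case False
  then have "k = 0 \<or> k = 1" by auto
  then show ?thesis using n by (auto simp: pi_one pi_Ysum)
qed

lemma pi_phi_mono: assumes n: "n \<ge> 1" shows "pi n (phi n (monom m)) + monom m \<in> JA n"
proof (cases "Poly_Mapping.keys m \<subseteq> gensA n")
  case False
  then obtain v where v: "v \<in> Poly_Mapping.keys m" "v \<notin> gensA n" by auto
  have "Phi n v = 0" using v rho_in_gensA[OF n] by (auto simp: Phi_def)
  then have "phi n (monom m) = 0" unfolding phi_mono monev_def
  proof (intro prod_zero bexI[of _ v])
    show "Phi n v ^ Poly_Mapping.lookup m v = 0" using \<open>Phi n v = 0\<close> v(1) by (simp add: in_keys_iff zero_power)
  qed (use v in auto)
  moreover have "monom m \<in> JA n"
  proof -
    have "monom m = monom (m - Poly_Mapping.single v 1) * var v ^ 1"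
      by (rule mono_split) (use v in \<open>auto simp: in_keys_iff\<close>)
    then show ?thesis using JA_var[OF v(2)] by (simp add: JA_mult)
  qed
  ultimately show ?thesis by simp
next
  case True
  define k where "k = Poly_Mapping.lookup m (rho_var n)"
  define m0 where "m0 = m - Poly_Mapping.single (rho_var n) k"
  have ms: "m = m0 + Poly_Mapping.single (rho_var n) k" unfolding m0_def by (rule mon_split) (simp add: k_def)
  have mm: "monom m = monom m0 * var (rho_var n) ^ k"
    by (subst ms) (simp add: mono_add mono_single_power)
  have lk: "Poly_Mapping.lookup m0 w = (if w = rho_var n then 0 else Poly_Mapping.lookup m w)" for w
    by (simp add: m0_def lookup_minus lookup_single when_def k_def)
  have km0: "w \<in> gensA n \<and> w \<noteq> rho_var n" if "w \<in> Poly_Mapping.keys m0" for w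
    using that True by (auto simp: in_keys_iff lk split: if_splits)
  have "monev (Phi n) m0 = monev var m0" unfolding monev_def
    by (rule prod.cong) (auto simp: Phi_def dest: km0)
  then have pm0: "phi n (monom m0) = monom m0" unfolding phi_mono by (simp only: mono_monev)
  have yf: "yfree n m0" unfolding yfree_def
  proof (intro conjI allI impI)
    show "Poly_Mapping.lookup m0 (2 * n, 0) = 0" by (simp add: lk rho_var_def)
  next
    fix j assume "j < n"
    show "Poly_Mapping.lookup m0 (2 * n, j) = 0"
    proof (rule ccontr)
      assume "Poly_Mapping.lookup m0 (2 * n, j) \<noteq> 0"
      then have "(2 * n, j) \<in> Poly_Mapping.keys m0" by (simp add: in_keys_iff)
      from km0[OF this] show False by (auto simp: gensA_def rho_var_def)
    qed
  qed
  have "pi n (phi n (monom m)) = monom m0 * pi n (Ysum n ^ k)"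
    unfolding mm hom_mult[OF hom_phi] hom_power[OF hom_phi] pm0 phi_rho
    by (rule pi_mono_mult[OF yf])
  also have "\<dots> = monom m0 * (if k = 0 then 1 else if k = 1 then Y n 0 else 0)"
    by (simp add: pi_Ysum_pow[OF n])
  finally have e: "pi n (phi n (monom m)) = \<dots>" .
  show ?thesis
  proof (cases "k \<ge> 2")
    case True
    have "var (rho_var n) ^ k = var (rho_var n) ^ ((k - 2) + 2)" using True by (simp only: le_add_diff_inverse2)
    then have "monom m = (monom m0 * var (rho_var n) ^ (k - 2)) * var (rho_var n) ^ 2"
      unfolding mm by (simp only: power_add mult.assoc)
    then have "monom m \<in> JA n" by (simp add: JA_mult JA_rho_sq)
    then show ?thesis using True e by simp
  next
    case False
    then have "k = 0 \<or> k = 1" by auto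
    then show ?thesis using e mm by (auto simp: Y_def rho_var_def JA_zero)
  qed
qed

lemma pi_phi: assumes n: "n \<ge> 1" shows "pi n (phi n x) + x \<in> JA n"
proof -
  have "pi n (phi n x) + x = (\<Sum>m\<in>Poly_Mapping.keys x. pi n (phi n (monom m)) + monom m)"
    by (subst (1 2) pol_expand[of x]) (simp add: hom_sum[OF hom_phi] pi_sum sum.distrib)
  also have "\<dots> \<in> JA n" by (intro JA_sum pi_phi_mono[OF n])
  finally show ?thesis .
qed

lemma phi_inj: assumes n: "n \<ge> 1" and b: "phi n x \<in> BD n" shows "x \<in> JA n"
proof -
  obtain w i where wi: "phi n x = dd n w + i" "i \<in> ID n" using b unfolding BD_def by auto
  have a: "pi n (phi n x) \<in> JA n" unfolding wi pi_add by (intro JA_add pi_dd[OF n] pi_ID[OF n wi(2)])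
  have "x = (pi n (phi n x) + x) + pi n (phi n x)" by (simp add: algebra_simps)
  also have "\<dots> \<in> JA n" by (intro JA_add pi_phi[OF n] a)
  finally show ?thesis .
qed


definition Svar :: "nat \<Rightarrow> nat \<times> nat \<Rightarrow> pol" where
  "Svar n v = (if fst v = n \<and> snd v = 0 then X n (n - 1)
     else if fst v = n \<and> 1 \<le> snd v \<and> snd v < n then X n (snd v - 1) + X n (snd v)
     else if v = (2 * n, 0) then Ysum n else var v)"

definition Pvar :: "nat \<Rightarrow> nat \<times> nat \<Rightarrow> pol" where
  "Pvar n v = (if fst v = n \<and> snd v < n then X n 0 + (\<Sum>i\<in>{snd v + 1..<n}. X n i)
     else if v = (2 * n, 0) then Ysum n else var v)"

definition Cvar :: "nat \<Rightarrow> nat \<times> nat \<Rightarrow> pol" where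
  "Cvar n v = (if v = (2 * n, 0) then var v else Svar n v)"

definition Gp :: "nat \<Rightarrow> nat \<times> nat \<Rightarrow> pol" where
  "Gp n v = (if fst v = 2 * n \<and> 1 \<le> snd v \<and> snd v < n then X n (snd v) ^ 2 else 0)"

definition sigma :: "nat \<Rightarrow> pol \<Rightarrow> pol" where "sigma n = subst (Svar n)"
definition psi :: "nat \<Rightarrow> pol \<Rightarrow> pol" where "psi n = subst (Pvar n)"
definition chi :: "nat \<Rightarrow> pol \<Rightarrow> pol" where "chi n = subst (Cvar n)"
definition dp :: "nat \<Rightarrow> pol \<Rightarrow> pol" where "dp n = der (Gp n)"

lemma hom_sigma: "hom (sigma n)" by (simp add: sigma_def hom_subst)
lemma hom_psi: "hom (psi n)" by (simp add: psi_def hom_subst)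
lemma hom_chi: "hom (chi n)" by (simp add: chi_def hom_subst)

lemma sigma_X: "n \<ge> 1 \<Longrightarrow> j < n \<Longrightarrow> sigma n (X n j) = (if j = 0 then X n (n - 1) else X n (j - 1) + X n j)"
  by (simp add: sigma_def X_def Svar_def)

lemma sigma_Y: "n \<ge> 1 \<Longrightarrow> sigma n (Y n j) = (if j = 0 then Ysum n else Y n j)"
  by (simp add: sigma_def Y_def Svar_def)

lemma sum_split0: "(n::nat) \<ge> 1 \<Longrightarrow> (\<Sum>j<n. (g j :: pol)) = g 0 + (\<Sum>j\<in>{1..<n}. g j)"
proof -
  assume "n \<ge> 1"
  then have "{..<n} = insert 0 {1..<n}" by auto
  then show ?thesis by simp
qed

lemma sigma_Ysum: "n \<ge> 1 \<Longrightarrow> sigma n (Ysum n) = Ysum n + (\<Sum>j\<in>{1..<n}. Y n j)"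
proof -
  assume n: "n \<ge> 1"
  have "sigma n (Ysum n) = (\<Sum>j<n. sigma n (Y n j))" by (simp add: Ysum_def hom_sum[OF hom_sigma])
  also have "\<dots> = sigma n (Y n 0) + (\<Sum>j\<in>{1..<n}. sigma n (Y n j))" by (rule sum_split0[OF n])
  also have "\<dots> = Ysum n + (\<Sum>j\<in>{1..<n}. Y n j)" using n by (simp add: sigma_Y)
  finally show ?thesis .
qed

lemma sigma_psi_var: assumes n: "n \<ge> 1" shows "sigma n (Pvar n v) = var v"
proof -
  obtain a b where v: "v = (a, b)" by force
  show ?thesis
  proof (cases "a = n \<and> b < n")
    case True
    have "sigma n (Pvar n v) = sigma n (X n 0) + (\<Sum>i\<in>{b + 1..<n}. sigma n (X n i))"
      using True v by (simp add: Pvar_def hom_add[OF hom_sigma] hom_sum[OF hom_sigma])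
    also have "\<dots> = X n (n - 1) + (\<Sum>i\<in>{b + 1..n - 1}. X n (i - 1) + X n i)"
    proof -
      have "{b + 1..<n} = {b + 1..n - 1}" using n by auto
      moreover have "sigma n (X n i) = X n (i - 1) + X n i" if "i \<in> {b + 1..n - 1}" for i
        using that n by (subst sigma_X) auto
      ultimately show ?thesis using n by (simp add: sigma_X)
    qed
    also have "\<dots> = X n (n - 1) + (X n b + X n (n - 1))"
    proof -
      have "b \<le> n - 1" using True by arith
      from telescope[OF this, of "X n"] show ?thesis by simp
    qed
    also have "\<dots> = X n b" by (simp add: algebra_simps)
    finally show ?thesis using True v by (simp add: X_def)
  next
    case False
    show ?thesis
    proof (cases "v = (2 * n, 0)")
      case True
      have "sigma n (Pvar n v) = sigma n (Ysum n)" using True n by (simp add: Pvar_def)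
      also have "\<dots> = Ysum n + (\<Sum>j\<in>{1..<n}. Y n j)" by (rule sigma_Ysum[OF n])
      also have "\<dots> = Y n 0" unfolding Ysum_def sum_split0[OF n] by (simp add: algebra_simps)
      finally show ?thesis using True by (simp add: Y_def)
    next
      case False2: False
      have "Pvar n v = var v" using False False2 v by (auto simp: Pvar_def)
      moreover have "Svar n v = var v" using False False2 v by (auto simp: Svar_def)
      ultimately show ?thesis by (simp add: sigma_def)
    qed
  qed
qed

lemma sigma_psi: assumes n: "n \<ge> 1" shows "sigma n (psi n p) = p"
proof -
  have "sigma n (psi n p) = subst (\<lambda>v. sigma n (Pvar n v)) p" by (simp add: sigma_def psi_def subst_comp)
  also have "(\<lambda>v. sigma n (Pvar n v)) = var" by (rule ext) (simp add: sigma_psi_var[OF n])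
  finally show ?thesis by (simp add: subst_id)
qed

lemma dp_X: "n \<ge> 1 \<Longrightarrow> dp n (X n j) = 0" by (simp add: dp_def X_def Gp_def)

lemma dd_sigma: assumes n: "n \<ge> 1" shows "dd n (sigma n p) = sigma n (dp n p)"
proof -
  have "der (dgen n) (Svar n v) = subst (Svar n) (Gp n v)" for v
  proof -
    obtain a b where v: "v = (a, b)" by force
    consider "a = n \<and> b < n" | "a = 2 * n \<and> b = 0" | "a = 2 * n \<and> 1 \<le> b \<and> b < n"
      | "\<not> (a = n \<and> b < n)" "\<not> (a = 2 * n \<and> b < n)" by linarith
    then show ?thesis
    proof cases
      case 1 then show ?thesis using n v
        by (auto simp: Svar_def Gp_def der_add dd_X[OF n, unfolded dd_der] hom_zero[OF hom_subst])
    next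
      case 2 then show ?thesis using n v
        by (simp add: Svar_def Gp_def dd_Ysum[OF n, unfolded dd_der] hom_zero[OF hom_subst])
    next
      case 3
      then have "der (dgen n) (Svar n v) = X n (b - 1) ^ 2 + X n b ^ 2"
        using n v by (simp add: Svar_def dd_Y[unfolded dd_der, folded Y_def] prev_pos flip: Y_def)
      moreover have "subst (Svar n) (Gp n v) = (X n (b - 1) + X n b) ^ 2"
        using 3 n v by (simp add: Gp_def hom_power[OF hom_subst] X_def Svar_def)
      ultimately show ?thesis by (simp add: frob)
    next
      case 4
      have "Svar n v = var v" using 4 v n by (auto simp: Svar_def)
      moreover have "Gp n v = 0" using 4 v by (auto simp: Gp_def)
      moreover have "dgen n v = 0" using 4 v by (auto simp: dgen_def)
      ultimately show ?thesis by (simp add: hom_zero[OF hom_subst])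
    qed
  qed
  then show ?thesis unfolding dd_der sigma_def dp_def by (rule der_subst_conj)
qed

lemma Y_def': "var (2 * n, j) = Y n j" by (simp add: Y_def)

lemma dp_psi: assumes n: "n \<ge> 1" shows "dp n (psi n p) = psi n (dd n p)"
proof -
  have dpX: "der (Gp n) (X n i) = 0" for i using n by (simp add: X_def Gp_def)
  have dpXs: "der (Gp n) (X n 0 + (\<Sum>i\<in>I. X n i)) = 0" for I by (simp add: der_add der_sum dpX)
  have psiX: "psi n (X n j) = X n 0 + (\<Sum>i\<in>{j + 1..<n}. X n i)" if "j < n" for j
    using that by (simp add: psi_def X_def Pvar_def)
  have "der (Gp n) (Pvar n v) = subst (Pvar n) (dgen n v)" for v
  proof -
    obtain a b where v: "v = (a, b)" by force
    consider "a = n \<and> b < n" | "a = 2 * n \<and> b = 0" | "a = 2 * n \<and> 1 \<le> b \<and> b < n"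
      | "\<not> (a = n \<and> b < n)" "\<not> (a = 2 * n \<and> b < n)" by linarith
    then show ?thesis
    proof cases
      case 1 then show ?thesis using n v
        by (simp add: Pvar_def dgen_def dpXs hom_zero[OF hom_subst])
    next
      case 2
      have "der (Gp n) (Pvar n v) = (\<Sum>j<n. Gp n (2 * n, j))"
        using 2 n v by (simp add: Pvar_def Ysum_def der_sum Y_def)
      also have "\<dots> = (\<Sum>j\<in>{1..<n}. X n j ^ 2)"
        unfolding sum_split0[OF n] by (simp add: Gp_def)
      finally have l: "der (Gp n) (Pvar n v) = (\<Sum>j\<in>{1..<n}. X n j ^ 2)" .
      have "subst (Pvar n) (dgen n v) = psi n (X n (n - 1)) ^ 2 + psi n (X n 0) ^ 2"
        using 2 n v by (simp add: dgen_def prev_0 psi_def hom_add[OF hom_subst] hom_power[OF hom_subst] flip: X_def)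
      also have "\<dots> = X n 0 ^ 2 + (X n 0 + (\<Sum>i\<in>{1..<n}. X n i)) ^ 2"
        using n by (simp add: psiX)
      also have "\<dots> = (\<Sum>j\<in>{1..<n}. X n j ^ 2)" by (simp add: frob frob_sum algebra_simps)
      finally show ?thesis using l by simp
    next
      case 3
      have l: "der (Gp n) (Pvar n v) = X n b ^ 2" using 3 n v by (simp add: Pvar_def Gp_def)
      have "subst (Pvar n) (dgen n v) = (psi n (X n (b - 1)) + psi n (X n b)) ^ 2"
        using 3 n v by (simp add: dgen_def prev_pos psi_def hom_add[OF hom_subst] hom_power[OF hom_subst] frob flip: X_def)
      also have "psi n (X n (b - 1)) = psi n (X n b) + X n b"
      proof -
        have "psi n (X n (b - 1)) = X n 0 + (\<Sum>i\<in>{b - 1 + 1..<n}. X n i)" by (rule psiX) (use 3 in arith)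
        moreover have "{b - 1 + 1..<n} = insert b {b + 1..<n}" using 3 by auto
        ultimately show ?thesis using 3 by (simp add: psiX algebra_simps)
      qed
      finally show ?thesis using l by (simp add: algebra_simps)
    next
      case 4
      have "Pvar n v = var v" using 4 v n by (auto simp: Pvar_def)
      moreover have "Gp n v = 0" using 4 v by (auto simp: Gp_def)
      moreover have "dgen n v = 0" using 4 v by (auto simp: dgen_def)
      ultimately show ?thesis by (simp add: hom_zero[OF hom_subst])
    qed
  qed
  then show ?thesis unfolding dd_der psi_def dp_def by (rule der_subst_conj)
qed


lemma ID_gen_var: "v \<notin> gensD n \<Longrightarrow> var v \<in> ID n"
  unfolding ID_def by (rule ideal_gen_gen) blast

lemma ID_gen_sq: "n < s \<Longrightarrow> s \<le> 2 * n \<Longrightarrow> j < n \<Longrightarrow> var (s, j) ^ 2 \<in> ID n"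
  unfolding ID_def by (rule ideal_gen_gen) blast

lemma ID_subst:
  assumes n: "n \<ge> 1"
    and F1: "\<And>v. v \<notin> gensD n \<Longrightarrow> F v = var v"
    and F2: "\<And>s j. n < s \<Longrightarrow> s \<le> 2 * n \<Longrightarrow> j < n \<Longrightarrow> (s, j) \<noteq> (2 * n, 0) \<Longrightarrow> F (s, j) = var (s, j)"
    and F3: "F (2 * n, 0) = Ysum n"
    and i: "i \<in> ID n"
  shows "subst F i \<in> ID n"
  using hom_subst i[unfolded ID_def] unfolding ID_def
proof (rule ideal_gen_hom)
  fix g assume "g \<in> {var v |v. v \<notin> gensD n} \<union> {var (s, j) ^ 2 |s j. n < s \<and> s \<le> 2 * n \<and> j < n}"
  then show "subst F g \<in> ideal_gen ({var v |v. v \<notin> gensD n} \<union> {var (s, j) ^ 2 |s j. n < s \<and> s \<le> 2 * n \<and> j < n})"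
  proof (elim UnE CollectE exE conjE)
    fix v assume "g = var v" "v \<notin> gensD n"
    then show ?thesis using F1 ID_gen_var[unfolded ID_def] by simp
  next
    fix s j assume h: "g = var (s, j) ^ 2" "n < s" "s \<le> 2 * n" "j < n"
    show ?thesis
    proof (cases "(s, j) = (2 * n, 0)")
      case True
      then show ?thesis using h F3 Ysum_sq[OF n, unfolded ID_def] by (simp add: hom_power[OF hom_subst])
    next
      case False
      then show ?thesis using h F2 ID_gen_sq[unfolded ID_def] by (simp add: hom_power[OF hom_subst])
    qed
  qed
qed

lemma sigma_ID: assumes n: "n \<ge> 1" and i: "i \<in> ID n" shows "sigma n i \<in> ID n"
  unfolding sigma_def using n
  by (rule ID_subst) (use n i in \<open>auto simp: Svar_def gensD_def\<close>)

lemma psi_ID: assumes n: "n \<ge> 1" and i: "i \<in> ID n" shows "psi n i \<in> ID n"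
  unfolding psi_def using n
  by (rule ID_subst) (use n i in \<open>auto simp: Pvar_def gensD_def\<close>)

lemma ID_congr_mult: "a + b \<in> ID n \<Longrightarrow> c + d \<in> ID n \<Longrightarrow> a * c + b * d \<in> ID n"
proof -
  assume 1: "a + b \<in> ID n" and 2: "c + d \<in> ID n"
  have "a * c + b * d = (a + b) * c + b * (c + d)" by (simp add: algebra_simps)
  then show ?thesis using 1 2 by (simp add: ID_add ID_mult ID_mult2)
qed

lemma ID_congr_power: "a + b \<in> ID n \<Longrightarrow> a ^ k + b ^ k \<in> ID n"
  by (induction k) (auto simp: ID_zero ID_congr_mult)

lemma ID_congr_prod: "(\<And>i. i \<in> I \<Longrightarrow> a i + b i \<in> ID n) \<Longrightarrow> prod a I + prod b I \<in> ID n"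
  by (induction I rule: infinite_finite_induct) (auto simp: ID_zero ID_congr_mult)

lemma hom_congr_mono:
  assumes f: "hom f" and g: "hom g" and v: "\<And>v. v \<in> Poly_Mapping.keys m \<Longrightarrow> f (var v) + g (var v) \<in> ID n"
  shows "f (monom m) + g (monom m) \<in> ID n"
  unfolding mono_monev monev_def hom_prod[OF f] hom_prod[OF g] hom_power[OF f] hom_power[OF g]
  by (intro ID_congr_prod ID_congr_power v)

definition badj :: "nat \<Rightarrow> mon \<Rightarrow> nat \<Rightarrow> bool" where
  "badj n m j \<longleftrightarrow> 2 \<le> Poly_Mapping.lookup m (n, j) \<or> 1 \<le> Poly_Mapping.lookup m (2 * n, j)"

definition red :: "nat \<Rightarrow> mon \<Rightarrow> bool" where
  "red n m \<longleftrightarrow> (\<forall>j. 1 \<le> j \<and> j < n \<longrightarrow> \<not> badj n m j)"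

lemma sigma_chi_red: assumes n: "n \<ge> 1" and r: "red n m"
  shows "sigma n (monom m) + phi n (chi n (monom m)) \<in> ID n"
proof -
  have "sigma n (var v) + (phi n \<circ> chi n) (var v) \<in> ID n" if v: "v \<in> Poly_Mapping.keys m" for v
  proof -
    obtain a b where ab: "v = (a, b)" by force
    have phiX: "phi n (X n i) = X n i" if "i < n" for i
      using that n by (simp add: X_def phi_var_gen)
    consider "a = n \<and> b < n" | "a = 2 * n \<and> b = 0" | "a = 2 * n \<and> 1 \<le> b \<and> b < n"
      | "\<not> (a = n \<and> b < n)" "\<not> (a = 2 * n \<and> b < n)" by linarith
    then show ?thesis
    proof cases
      case 1
      then have "Cvar n v = Svar n v" using n ab by (simp add: Cvar_def)
      moreover have "phi n (Svar n v) = Svar n v"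
        using 1 n ab by (auto simp: Svar_def hom_add[OF hom_phi] phiX)
      ultimately show ?thesis by (simp add: sigma_def chi_def ID_zero)
    next
      case 2
      then show ?thesis using n ab
        by (simp add: sigma_def chi_def Cvar_def Svar_def phi_rho[unfolded rho_var_def] ID_zero)
    next
      case 3
      then have "badj n m b" using v ab by (simp add: badj_def in_keys_iff)
      then show ?thesis using r 3 unfolding red_def by blast
    next
      case 4
      have sv: "Svar n v = var v" and cv: "Cvar n v = var v" using 4 ab n by (auto simp: Svar_def Cvar_def)
      show ?thesis
      proof (cases "v \<in> gensA n")
        case True
        then have "v \<noteq> rho_var n" using 4 ab n by (auto simp: rho_var_def)
        then have "phi n (var v) = var v" using True by (simp add: phi_def Phi_def)
        then show ?thesis by (simp add: sigma_def chi_def sv cv ID_zero)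
      next
        case False
        then have "v \<noteq> rho_var n" using rho_in_gensA[OF n] by auto
        then have "phi n (var v) = 0" using False by (simp add: phi_def Phi_def)
        moreover have "v \<notin> gensD n" using 4 ab False by (auto simp: gensD_def gensA_def rho_var_def)
        ultimately show ?thesis by (simp add: sigma_def chi_def sv cv ID_gen_var)
      qed
    qed
  qed
  from hom_congr_mono[OF hom_sigma hom_comp[OF hom_phi hom_chi] this] show ?thesis by simp
qed


definition ex :: "nat \<Rightarrow> nat \<Rightarrow> mon" where "ex n k = Poly_Mapping.single (n, k) 2"
definition ey :: "nat \<Rightarrow> nat \<Rightarrow> mon" where "ey n k = Poly_Mapping.single (2 * n, k) 1"

definition fb :: "nat \<Rightarrow> mon \<Rightarrow> nat" where
  "fb n m = (LEAST j. 1 \<le> j \<and> j < n \<and> badj n m j)"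

definition hmon :: "nat \<Rightarrow> mon \<Rightarrow> pol" where
  "hmon n m = (if red n m then 0 else if Poly_Mapping.lookup m (2 * n, fb n m) = 0
     then monom (m - ex n (fb n m) + ey n (fb n m)) else 0)"

definition hh :: "nat \<Rightarrow> pol \<Rightarrow> pol" where "hh n = lin (hmon n)"
definition R :: "nat \<Rightarrow> pol \<Rightarrow> pol" where "R n = lin (\<lambda>m. if red n m then monom m else 0)"

definition J :: "nat \<Rightarrow> mon \<Rightarrow> nat set" where
  "J n m = {j \<in> {1..<n}. odd (Poly_Mapping.lookup m (2 * n, j))}"

lemma of_nat_pol: "(of_nat c :: pol) = (if odd c then 1 else 0)"
  by (induction c) auto

lemma lookup_xy: "(n::nat) \<ge> 1 \<Longrightarrow> (n, i) \<noteq> (2 * n, j)" by auto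

lemma dp_mono: assumes n: "n \<ge> 1"
  shows "dp n (monom m) = (\<Sum>j\<in>J n m. monom (m - ey n j + ex n j))"
proof -
  let ?t = "\<lambda>v. of_nat (Poly_Mapping.lookup m v) * monom (m - Poly_Mapping.single v 1) * Gp n v"
  let ?YS = "(\<lambda>j. (2 * n, j)) ` {1..<n}"
  have "dp n (monom m) = (\<Sum>v\<in>Poly_Mapping.keys m. ?t v)" by (simp add: dp_def der_mono dmon'_def)
  also have "\<dots> = (\<Sum>v\<in>Poly_Mapping.keys m \<union> ?YS. ?t v)"
    by (rule sum.mono_neutral_left) (auto simp: in_keys_iff)
  also have "\<dots> = (\<Sum>v\<in>?YS. ?t v)"
    by (rule sum.mono_neutral_right) (auto simp: Gp_def)
  also have "\<dots> = (\<Sum>j\<in>{1..<n}. ?t (2 * n, j))"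
    by (subst sum.reindex) (auto simp: inj_on_def)
  also have "\<dots> = (\<Sum>j\<in>{1..<n}. if odd (Poly_Mapping.lookup m (2 * n, j)) then monom (m - ey n j + ex n j) else 0)"
    by (rule sum.cong) (auto simp: of_nat_pol Gp_def X_def ey_def ex_def mono_single_power[symmetric] mono_add)
  also have "\<dots> = (\<Sum>j\<in>J n m. monom (m - ey n j + ex n j))"
    unfolding J_def by (rule sum.inter_filter[symmetric]) simp
  finally show ?thesis .
qed

lemma lookup_mj: assumes n: "n \<ge> 1" shows
  "Poly_Mapping.lookup (m - ey n j + ex n j) w =
     (if w = (2 * n, j) then Poly_Mapping.lookup m w - 1
      else if w = (n, j) then Poly_Mapping.lookup m w + 2 else Poly_Mapping.lookup m w)"
  using n by (auto simp: lookup_add lookup_minus ey_def ex_def lookup_single when_def)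

lemma lookup_mk: assumes n: "n \<ge> 1" shows
  "Poly_Mapping.lookup (m - ex n k + ey n k) w =
     (if w = (n, k) then Poly_Mapping.lookup m w - 2
      else if w = (2 * n, k) then Poly_Mapping.lookup m w + 1 else Poly_Mapping.lookup m w)"
  using n by (auto simp: lookup_add lookup_minus ey_def ex_def lookup_single when_def)

lemma fb_char:
  assumes "1 \<le> k" "k < n" "badj n m k" "\<And>i. 1 \<le> i \<Longrightarrow> i < k \<Longrightarrow> \<not> badj n m i"
  shows "\<not> red n m" "fb n m = k"
proof -
  show "\<not> red n m" using assms unfolding red_def by blast
  show "fb n m = k" unfolding fb_def
    by (rule Least_equality) (use assms in \<open>auto simp: not_less[symmetric]\<close>)
qed

lemma fb_props:
  assumes "\<not> red n m"
  shows "1 \<le> fb n m" "fb n m < n" "badj n m (fb n m)" "\<And>i. 1 \<le> i \<Longrightarrow> i < fb n m \<Longrightarrow> \<not> badj n m i"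
proof -
  obtain j where j: "1 \<le> j \<and> j < n \<and> badj n m j" using assms unfolding red_def by blast
  have "1 \<le> fb n m \<and> fb n m < n \<and> badj n m (fb n m)" unfolding fb_def by (rule LeastI[of _ j]) (rule j)
  then show "1 \<le> fb n m" "fb n m < n" "badj n m (fb n m)" by auto
  fix i assume "1 \<le> i" "i < fb n m"
  then show "\<not> badj n m i" using not_less_Least[of i "\<lambda>j. 1 \<le> j \<and> j < n \<and> badj n m j"]
    unfolding fb_def using \<open>1 \<le> fb n m \<and> fb n m < n \<and> badj n m (fb n m)\<close> unfolding fb_def by auto
qed

lemma hmon_at:
  assumes "1 \<le> k" "k < n" "badj n w k" "\<And>i. 1 \<le> i \<Longrightarrow> i < k \<Longrightarrow> \<not> badj n w i"
  shows "hmon n w = (if Poly_Mapping.lookup w (2 * n, k) = 0 then monom (w - ex n k + ey n k) else 0)"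
  using fb_char[OF assms] by (simp add: hmon_def)


lemma badj_mj: "n \<ge> 1 \<Longrightarrow> i \<noteq> j \<Longrightarrow> badj n (m - ey n j + ex n j) i = badj n m i"
  by (simp add: badj_def lookup_mj)

lemma J_sub: "J n m \<subseteq> {1..<n}" by (auto simp: J_def)

lemma J_badj: assumes "j \<in> J n m" shows "badj n m j"
proof -
  have "odd (Poly_Mapping.lookup m (2 * n, j))" using assms by (simp add: J_def)
  then have "0 < Poly_Mapping.lookup m (2 * n, j)" by (rule odd_pos)
  then show ?thesis by (simp add: badj_def)
qed

lemma homotopy_mono: assumes n: "n \<ge> 1"
  shows "dp n (hh n (monom m)) + hh n (dp n (monom m)) + monom m + R n (monom m) \<in> ID n"
proof -
  have hhm: "hh n (monom m) = hmon n m" by (simp add: hh_def)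
  have Rm: "R n (monom m) = (if red n m then monom m else 0)" by (simp add: R_def)
  have hhdp: "hh n (dp n (monom m)) = (\<Sum>j\<in>J n m. hmon n (m - ey n j + ex n j))"
    by (simp add: dp_mono[OF n] hh_def lin_sum)
  show ?thesis
  proof (cases "red n m")
    case True
    have "J n m = {}"
    proof -
      have "\<not> odd (Poly_Mapping.lookup m (2 * n, j))" if "j \<in> {1..<n}" for j
      proof -
        have "\<not> 1 \<le> Poly_Mapping.lookup m (2 * n, j)" using True that unfolding red_def badj_def by auto
        then have "Poly_Mapping.lookup m (2 * n, j) = 0" by simp
        then show ?thesis by simp
      qed
      then show ?thesis unfolding J_def by auto
    qed
    moreover have "dp n 0 = 0" by (simp add: dp_def)
    ultimately show ?thesis using True by (simp add: hhm Rm hhdp hmon_def ID_zero)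
  next
    case False
    define k where "k = fb n m"
    note fp = fb_props[OF False, folded k_def]
    have jk: "k \<le> j" if "j \<in> J n m" for j
      using fp(4)[of j] J_badj[OF that] J_sub that by force
    have lowj: "\<And>i. 1 \<le> i \<Longrightarrow> i < k \<Longrightarrow> \<not> badj n (m - ey n j + ex n j) i" if "j \<in> J n m" for j
      using jk[OF that] fp(4) badj_mj[OF n] by (metis not_less)
    show ?thesis
    proof (cases "Poly_Mapping.lookup m (2 * n, k) = 0")
      case True
      define m' where "m' = m - ex n k + ey n k"
      have hm: "hmon n m = monom m'" using False True by (simp add: hmon_def k_def m'_def)
      have xk: "2 \<le> Poly_Mapping.lookup m (n, k)" using fp(3) True by (simp add: badj_def)
      have kJ: "k \<notin> J n m" using True by (simp add: J_def)
      have Jm': "J n m' = insert k (J n m)"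
        using fp(1,2) n unfolding J_def m'_def by (auto simp: lookup_mk True)
      have eq1: "m' - ey n k + ex n k = m"
        using mon_split[OF xk] by (simp add: m'_def ex_def)
      have eq2: "(m - ey n j + ex n j) - ex n k + ey n k = m' - ey n j + ex n j" if "j \<in> J n m" for j
      proof -
        have "j \<noteq> k" using that kJ by auto
        then show ?thesis
          by (intro poly_mapping_eqI) (use n in \<open>auto simp: m'_def lookup_mj lookup_mk\<close>)
      qed
      have hj: "hmon n (m - ey n j + ex n j) = monom (m' - ey n j + ex n j)" if "j \<in> J n m" for j
      proof -
        have "j \<noteq> k" using that kJ by auto
        have "hmon n (m - ey n j + ex n j) = (if Poly_Mapping.lookup (m - ey n j + ex n j) (2 * n, k) = 0
            then monom ((m - ey n j + ex n j) - ex n k + ey n k) else 0)"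
          by (rule hmon_at) (use fp lowj[OF that] badj_mj[OF n] \<open>j \<noteq> k\<close> in auto)
        also have "\<dots> = monom (m' - ey n j + ex n j)"
          using \<open>j \<noteq> k\<close> n True by (simp add: lookup_mj eq2[OF that])
        finally show ?thesis .
      qed
      have "dp n (hh n (monom m)) = monom m + (\<Sum>j\<in>J n m. monom (m' - ey n j + ex n j))"
        unfolding hhm hm dp_mono[OF n] Jm' using kJ J_sub[of n m]
        by (simp add: eq1 finite_subset)
      moreover have "hh n (dp n (monom m)) = (\<Sum>j\<in>J n m. monom (m' - ey n j + ex n j))"
        unfolding hhdp by (rule sum.cong) (simp_all add: hj)
      ultimately show ?thesis using False by (simp add: Rm ID_zero algebra_simps)
    next
      case False2: False
      have hm: "hmon n m = 0" using False False2 by (simp add: hmon_def k_def)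
      have hj: "hmon n (m - ey n j + ex n j) = (if j = k \<and> Poly_Mapping.lookup m (2 * n, k) = 1 then monom m else 0)"
        if "j \<in> J n m" for j
      proof (cases "j = k")
        case True
        have "hmon n (m - ey n j + ex n j) = (if Poly_Mapping.lookup (m - ey n j + ex n j) (2 * n, k) = 0
            then monom ((m - ey n j + ex n j) - ex n k + ey n k) else 0)"
          by (rule hmon_at) (use fp lowj[OF that] True n in \<open>auto simp: badj_def lookup_mj\<close>)
        also have "\<dots> = (if j = k \<and> Poly_Mapping.lookup m (2 * n, k) = 1 then monom m else 0)"
        proof (cases "Poly_Mapping.lookup m (2 * n, k) = 1")
          case True2: True
          have "(m - ey n k + ex n k) - ex n k + ey n k = m"
            using mon_split[of 1 m "(2 * n, k)"] True2 by (simp add: ey_def)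
          then show ?thesis using True True2 n by (simp add: lookup_mj)
        next
          case False3: False
          then show ?thesis using True n False2 by (simp add: lookup_mj)
        qed
        finally show ?thesis .
      next
        case False
        have "hmon n (m - ey n j + ex n j) = (if Poly_Mapping.lookup (m - ey n j + ex n j) (2 * n, k) = 0
            then monom ((m - ey n j + ex n j) - ex n k + ey n k) else 0)"
          by (rule hmon_at) (use fp lowj[OF that] badj_mj[OF n] False in auto)
        also have "\<dots> = 0" using False False2 n by (simp add: lookup_mj)
        finally show ?thesis using False by simp
      qed
      have "hh n (dp n (monom m)) = (\<Sum>j\<in>J n m. if j = k \<and> Poly_Mapping.lookup m (2 * n, k) = 1 then monom m else 0)"
        unfolding hhdp by (rule sum.cong) (simp_all add: hj)
      also have "\<dots> = (if Poly_Mapping.lookup m (2 * n, k) = 1 then monom m else 0)"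
      proof (cases "Poly_Mapping.lookup m (2 * n, k) = 1")
        case True
        then have "k \<in> J n m" using fp(1,2) by (simp add: J_def)
        then show ?thesis using True J_sub[of n m] by (simp add: finite_subset)
      qed simp
      finally have hd: "hh n (dp n (monom m)) = \<dots>" .
      show ?thesis
      proof (cases "Poly_Mapping.lookup m (2 * n, k) = 1")
        case True
        moreover have "dp n 0 = 0" by (simp add: dp_def)
        ultimately show ?thesis using False by (simp add: hhm hm hd Rm ID_zero)
      next
        case False3: False
        have "Bad n m" unfolding Bad_def
          by (intro disjI2 exI[of _ "2 * n"] exI[of _ k]) (use n fp(2) False2 False3 in auto)
        moreover have "dp n 0 = 0" by (simp add: dp_def)
        ultimately show ?thesis using False False3 by (simp add: hhm hm hd Rm Bad_mono_ID)
      qed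
    qed
  qed
qed


lemma hh_sum: "hh n (sum g S) = (\<Sum>i\<in>S. hh n (g i))" by (simp add: hh_def lin_sum)
lemma R_sum: "R n (sum g S) = (\<Sum>i\<in>S. R n (g i))" by (simp add: R_def lin_sum)
lemma dp_sum: "dp n (sum g S) = (\<Sum>i\<in>S. dp n (g i))" by (simp add: dp_def der_sum)
lemma hh_add: "hh n (a + b) = hh n a + hh n b" by (simp add: hh_def lin_add)
lemma R_add: "R n (a + b) = R n a + R n b" by (simp add: R_def lin_add)
lemma dp_add: "dp n (a + b) = dp n a + dp n b" by (simp add: dp_def der_add)

lemma homotopy: assumes n: "n \<ge> 1"
  shows "dp n (hh n p) + hh n (dp n p) + p + R n p \<in> ID n"
proof -
  let ?P = "\<Sum>m\<in>Poly_Mapping.keys p. monom m"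
  have "dp n (hh n ?P) + hh n (dp n ?P) + ?P + R n ?P
      = (\<Sum>m\<in>Poly_Mapping.keys p. dp n (hh n (monom m)) + hh n (dp n (monom m)) + monom m + R n (monom m))"
    by (simp only: hh_sum R_sum dp_sum sum.distrib)
  also have "\<dots> \<in> ID n"
    by (intro ID_sum homotopy_mono[OF n])
  finally have "dp n (hh n ?P) + hh n (dp n ?P) + ?P + R n ?P \<in> ID n" .
  then show ?thesis by (simp only: pol_expand[of p, symmetric])
qed

lemma hh_ID: assumes n: "n \<ge> 1" and i: "i \<in> ID n" shows "hh n i \<in> ID n"
proof -
  have "hmon n m \<in> ID n" if b: "Bad n m" for m
  proof (cases "red n m \<or> Poly_Mapping.lookup m (2 * n, fb n m) \<noteq> 0")
    case True then show ?thesis by (auto simp: hmon_def ID_zero)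
  next
    case False
    define k where "k = fb n m"
    have nr: "\<not> red n m" and y0: "Poly_Mapping.lookup m (2 * n, k) = 0" using False by (auto simp: k_def)
    note fp = fb_props[OF nr, folded k_def]
    have hm: "hmon n m = monom (m - ex n k + ey n k)" using nr y0 by (simp add: hmon_def k_def)
    have "Bad n (m - ex n k + ey n k)" using b[unfolded Bad_def]
    proof (elim disjE bexE exE conjE)
      fix v assume v: "v \<in> Poly_Mapping.keys m" "v \<notin> gensD n"
      have "v \<noteq> (n, k)" "v \<noteq> (2 * n, k)" using v(2) fp(2) by (auto simp: gensD_def)
      then have "v \<in> Poly_Mapping.keys (m - ex n k + ey n k)" using v(1) n by (simp add: in_keys_iff lookup_mk)
      then show ?thesis unfolding Bad_def using v(2) by (intro disjI1 bexI[of _ v])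
    next
      fix s j assume h: "n < s" "s \<le> 2 * n" "j < n" "2 \<le> Poly_Mapping.lookup m (s, j)"
      have ne1: "(s, j) \<noteq> (n, k)" using h by auto
      moreover have ne2: "(s, j) \<noteq> (2 * n, k)"
      proof
        assume "(s, j) = (2 * n, k)"
        then have "Poly_Mapping.lookup m (s, j) = 0" using y0 by simp
        then show False using h(4) by simp
      qed
      ultimately have "2 \<le> Poly_Mapping.lookup (m - ex n k + ey n k) (s, j)" 
      proof -
        have "Poly_Mapping.lookup (m - ex n k + ey n k) (s, j) = Poly_Mapping.lookup m (s, j)"
          using lookup_mk[OF n, of m k "(s, j)"] ne1 ne2 by presburger
        then show ?thesis using h(4) by simp
      qed
      then show ?thesis unfolding Bad_def using h by (intro disjI2 exI[of _ s] exI[of _ j]) simp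
    qed
    then show ?thesis by (simp add: hm Bad_mono_ID)
  qed
  moreover have "hh n i = (\<Sum>m\<in>Poly_Mapping.keys i. hmon n m)" by (simp add: hh_def lin_def)
  ultimately show ?thesis using i[unfolded ID_iff] by (simp add: ID_sum)
qed

lemma surj: assumes n: "n \<ge> 1" and z: "dd n z \<in> ID n" shows "\<exists>x. phi n x - z \<in> BD n"
proof -
  define z' where "z' = psi n z"
  have dz': "dp n z' \<in> ID n" unfolding z'_def dp_psi[OF n] by (rule psi_ID[OF n z])
  have hdz: "hh n (dp n z') \<in> ID n" by (rule hh_ID[OF n dz'])
  have A: "z' + R n z' + dp n (hh n z') \<in> ID n"
  proof -
    have eq: "z' + R n z' + dp n (hh n z') = (dp n (hh n z') + hh n (dp n z') + z' + R n z') + hh n (dp n z')"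
      by (simp add: algebra_simps)
    show ?thesis unfolding eq by (rule ID_add[OF homotopy[OF n, of z'] hdz])
  qed
  have sA: "sigma n (z' + R n z' + dp n (hh n z')) = z + sigma n (R n z') + dd n (sigma n (hh n z'))"
    by (simp add: hom_add[OF hom_sigma] z'_def sigma_psi[OF n] dd_sigma[OF n])
  have B: "sigma n (R n z') + phi n (chi n (R n z')) \<in> ID n"
  proof -
    have "R n z' = (\<Sum>m\<in>Poly_Mapping.keys z'. if red n m then monom m else 0)" by (simp add: R_def lin_def)
    then have "sigma n (R n z') + phi n (chi n (R n z'))
        = (\<Sum>m\<in>Poly_Mapping.keys z'. if red n m then sigma n (monom m) + phi n (chi n (monom m)) else 0)"
      by (simp add: hom_sum[OF hom_sigma] hom_sum[OF hom_chi] hom_sum[OF hom_phi] sum.distrib[symmetric]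
          if_distrib hom_zero[OF hom_sigma] hom_zero[OF hom_chi] hom_zero[OF hom_phi] cong: if_cong)
    also have "\<dots> \<in> ID n" by (intro ID_sum) (auto simp: sigma_chi_red[OF n] ID_zero)
    finally show ?thesis .
  qed
  define x where "x = chi n (R n z')"
  have "phi n x - z = dd n (sigma n (hh n z')) + (sigma n (z' + R n z' + dp n (hh n z')) + (sigma n (R n z') + phi n x))"
    unfolding sA x_def by (simp add: pol_minus_eq_plus algebra_simps)
  moreover have "sigma n (z' + R n z' + dp n (hh n z')) + (sigma n (R n z') + phi n x) \<in> ID n"
    using sigma_ID[OF n A] B by (simp add: x_def ID_add)
  ultimately have "phi n x - z \<in> BD n" unfolding BD_def by blast
  then show ?thesis by blast
qed

theorem lemma5p2:
  fixes n :: nat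
  assumes "n \<ge> 1"
  shows "\<exists>\<phi>. E2_iso n \<phi>"
proof (intro exI[of _ "phi n"])
  note n = assms
  show "E2_iso n (phi n)" unfolding E2_iso_def
  proof (intro conjI allI impI ballI iffI)
    fix x y show "phi n (x + y) = phi n x + phi n y" by (rule hom_add[OF hom_phi])
  next
    fix x y show "phi n (x * y) = phi n x * phi n y" by (rule hom_mult[OF hom_phi])
  next
    show "phi n 1 = 1" by (rule hom_one[OF hom_phi])
  next
    fix s j assume "n \<le> s \<and> s < 2 * n \<and> j < n"
    then show "phi n (var (s, j)) = var (s, j)" by (simp add: phi_var_gen)
  next
    show "phi n (var (rho_var n)) = (\<Sum>j<n. var (2 * n, j))" by (simp add: phi_rho Ysum_def Y_def)
  next
    fix x show "phi n x \<in> ZD n" unfolding ZD_def by (simp add: phi_cycle[OF n])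
  next
    fix x assume "phi n x \<in> BD n" then show "x \<in> JA n" by (rule phi_inj[OF n])
  next
    fix x assume "x \<in> JA n" then show "phi n x \<in> BD n" by (rule JA_phi_BD[OF n])
  next
    fix z assume "z \<in> ZD n" then show "\<exists>x. phi n x - z \<in> BD n" unfolding ZD_def by (intro surj[OF n]) simp
  qed
qed


end
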